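(* Let $r_1,r_2>0$ and let $\gamma_1,\gamma_2$ be two disjoint geodesics in $\mathbb{H}^2$, and let $\gamma$ be the set of points $q\in\mathbb{H}^2$ with $r_1\sinh d(q,\gamma_1)=r_2\sinh d(q,\gamma_2)$ (this set is a geodesic). Suppose $\mathbb{H}^2$ is isometrically identified with the Poincaré unit disk $\mathbb{D}$ so that $\gamma$ is a diameter of $\mathbb{D}$. Then the Euclidean circles containing $\gamma_1$ and $\gamma_2$ have radii in ratio $r_1:r_2$, and the inversive distance between these two Euclidean circles equals $\cosh d_{\mathbb{H}}(\gamma_1,\gamma_2)$.
   Context: The inversive distance of two Euclidean circles with radii $\rho_1,\rho_2$ whose centers are at distance $l$ is $(l^2-\rho_1^2-\rho_2^2)/(2\rho_1\rho_2)$. *)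

theory Defs
  imports "HOL-Analysis.Analysis"
begin

definition pdisk :: "complex set" where
  "pdisk = ball 0 1"

definition hdist :: "complex \<Rightarrow> complex \<Rightarrow> real" where
  "hdist z w = arcosh (1 + 2 * (cmod (z - w))\<^sup>2 / ((1 - (cmod z)\<^sup>2) * (1 - (cmod w)\<^sup>2)))"

definition hgeodesic :: "complex set \<Rightarrow> bool" where
  "hgeodesic G \<longleftrightarrow> (\<exists>f :: real \<Rightarrow> complex.
      (\<forall>t. f t \<in> pdisk) \<and> (\<forall>s t. hdist (f s) (f t) = \<bar>s - t\<bar>) \<and> G = range f)"

definition hdist_set :: "complex \<Rightarrow> complex set \<Rightarrow> real" where
  "hdist_set q S = Inf {hdist q p | p. p \<in> S}"

definition hdist_sets :: "complex set \<Rightarrow> complex set \<Rightarrow> real" where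
  "hdist_sets S T = Inf {hdist p q | p q. p \<in> S \<and> q \<in> T}"

definition inversive_distance :: "complex \<Rightarrow> real \<Rightarrow> complex \<Rightarrow> real \<Rightarrow> real" where
  "inversive_distance c1 \<rho>1 c2 \<rho>2 = ((cmod (c1 - c2))\<^sup>2 - \<rho>1\<^sup>2 - \<rho>2\<^sup>2) / (2 * \<rho>1 * \<rho>2)"

definition diameter_of_disk :: "complex set \<Rightarrow> bool" where
  "diameter_of_disk G \<longleftrightarrow> (\<exists>u. cmod u = 1 \<and> G = {complex_of_real t * u | t. \<bar>t\<bar> < 1})"

end

theory Submission
  imports Defs
begin

definition mob :: "complex \<Rightarrow> complex \<Rightarrow> complex" where
  "mob a z = (z - a) / (1 - cnj a * z)"

lemma cnorm_sq': "complex_of_real ((cmod x)\<^sup>2) = x * cnj x"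
  by (rule complex_norm_square)

lemma cnorm_sq: "(complex_of_real (cmod x))\<^sup>2 = x * cnj x"
  using cnorm_sq' by (simp only: of_real_power)

lemma denom_nz:
  assumes "cmod a < 1" "cmod z < 1"
  shows "1 - cnj a * z \<noteq> 0"
proof
  assume "1 - cnj a * z = 0"
  hence "cnj a * z = 1" by simp
  hence "cmod (cnj a * z) = 1" by simp
  moreover have "cmod (cnj a * z) < 1"
  proof -
    have "cmod (cnj a * z) = cmod a * cmod z" by (simp add: norm_mult)
    also have "\<dots> \<le> cmod z" using assms(1) by (simp add: mult_left_le_one_le)
    finally show ?thesis using assms(2) by simp
  qed
  ultimately show False by simp
qed
lemma one_minus_div: "(d::'a::field) \<noteq> 0 \<Longrightarrow> 1 - x / d = (d - x) / d"
  by (simp add: diff_divide_distrib)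

lemma mob_norm:
  assumes "cmod a < 1" "cmod z < 1"
  shows "1 - (cmod (mob a z))\<^sup>2 = (1 - (cmod a)\<^sup>2) * (1 - (cmod z)\<^sup>2) / (cmod (1 - cnj a * z))\<^sup>2"
proof -
  have nz: "1 - cnj a * z \<noteq> 0" using denom_nz assms by blast
  have nz': "1 - a * cnj z \<noteq> 0" using nz complex_cnj_zero_iff[of "1 - cnj a * z"] by simp
  have e: "mob a z * cnj (mob a z) = (z - a) * (cnj z - cnj a) / ((1 - cnj a * z) * (1 - a * cnj z))"
    by (simp add: mob_def)
  have "complex_of_real (1 - (cmod (mob a z))\<^sup>2) = 1 - (z - a) * (cnj z - cnj a) / ((1 - cnj a * z) * (1 - a * cnj z))"
    by (simp only: of_real_diff of_real_1 cnorm_sq' e)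
  also have "\<dots> = ((1 - cnj a * z) * (1 - a * cnj z) - (z - a) * (cnj z - cnj a)) / ((1 - cnj a * z) * (1 - a * cnj z))"
    using nz nz' by (intro one_minus_div) simp
  also have "(1 - cnj a * z) * (1 - a * cnj z) - (z - a) * (cnj z - cnj a) = (1 - a * cnj a) * (1 - z * cnj z)"
    by (simp add: algebra_simps)
  also have "(1 - cnj a * z) * (1 - a * cnj z) = (1 - cnj a * z) * cnj (1 - cnj a * z)"
    by simp
  finally have "complex_of_real (1 - (cmod (mob a z))\<^sup>2) = complex_of_real ((1 - (cmod a)\<^sup>2) * (1 - (cmod z)\<^sup>2) / (cmod (1 - cnj a * z))\<^sup>2)"
    by (simp only: of_real_diff of_real_1 cnorm_sq' of_real_mult of_real_divide)
  thus ?thesis by (simp only: of_real_eq_iff)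
qed

lemma mob_diff:
  assumes "cmod a < 1" "cmod z < 1" "cmod w < 1"
  shows "(cmod (mob a z - mob a w))\<^sup>2 = (1 - (cmod a)\<^sup>2)\<^sup>2 * (cmod (z - w))\<^sup>2 / ((cmod (1 - cnj a * z))\<^sup>2 * (cmod (1 - cnj a * w))\<^sup>2)"
proof -
  have nz: "1 - cnj a * z \<noteq> 0" "1 - cnj a * w \<noteq> 0" using denom_nz assms by blast+
  have "mob a z - mob a w = (1 - a * cnj a) * (z - w) / ((1 - cnj a * z) * (1 - cnj a * w))"
    using nz unfolding mob_def by (simp add: field_simps)
  hence "cmod (mob a z - mob a w) = cmod (1 - a * cnj a) * cmod (z - w) / (cmod (1 - cnj a * z) * cmod (1 - cnj a * w))"
    by (simp add: norm_mult norm_divide)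
  moreover have "cmod (1 - a * cnj a) = 1 - (cmod a)\<^sup>2"
  proof -
    have "1 - a * cnj a = complex_of_real (1 - (cmod a)\<^sup>2)" by (simp only: cnorm_sq' of_real_diff of_real_1)
    moreover have "(cmod a)\<^sup>2 \<le> 1" using assms(1) by (simp add: power_le_one)
    ultimately show ?thesis by (simp only: norm_of_real)
  qed
  ultimately show ?thesis by (simp add: power_divide power_mult_distrib)
qed

lemma mob_in_disk:
  assumes "cmod a < 1" "cmod z < 1"
  shows "cmod (mob a z) < 1"
proof -
  have nz: "1 - cnj a * z \<noteq> 0" using denom_nz assms by blast
  have "(cmod a)\<^sup>2 < 1" "(cmod z)\<^sup>2 < 1" using assms by (simp_all add: power_less_one_iff abs_square_less_1)
  hence "0 < (1 - (cmod a)\<^sup>2) * (1 - (cmod z)\<^sup>2) / (cmod (1 - cnj a * z))\<^sup>2"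
    using nz by simp
  hence "(cmod (mob a z))\<^sup>2 < 1" using mob_norm[OF assms] by linarith
  thus ?thesis by (simp add: abs_square_less_1)
qed

lemma mob_inv:
  assumes "cmod a < 1" "cmod z < 1"
  shows "mob (-a) (mob a z) = z"
proof -
  have nz: "1 - cnj a * z \<noteq> 0" using denom_nz assms by blast
  have "1 - a * cnj a \<noteq> 0"
  proof
    assume "1 - a * cnj a = 0"
    hence "complex_of_real ((cmod a)\<^sup>2) = 1" by (simp only: cnorm_sq') simp
    hence "(cmod a)\<^sup>2 = 1" using of_real_eq_1_iff by blast
    thus False using assms(1) by (simp add: abs_square_eq_1)
  qed
  note e = this
  have "mob a z + a = z * (1 - a * cnj a) / (1 - cnj a * z)"
    using nz unfolding mob_def by (simp add: field_simps)
  moreover have "1 - cnj (-a) * mob a z = (1 - a * cnj a) / (1 - cnj a * z)"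
    using nz unfolding mob_def by (simp add: field_simps)
  ultimately show ?thesis using nz e by (simp add: mob_def)
qed

lemma mob_self: "mob a a = 0" by (simp add: mob_def)

definition hq :: "complex \<Rightarrow> complex \<Rightarrow> real" where
  "hq z w = 1 + 2 * (cmod (z - w))\<^sup>2 / ((1 - (cmod z)\<^sup>2) * (1 - (cmod w)\<^sup>2))"

lemma hdist_hq: "hdist z w = arcosh (hq z w)" by (simp add: hdist_def hq_def)

lemma hq_aux:
  fixes A N Z W Dz Dw :: real
  assumes "A < 1" "Z < 1" "W < 1" "Dz > 0" "Dw > 0"
  shows "1 + 2 * ((1 - A)\<^sup>2 * N / (Dz * Dw)) / (((1 - A) * (1 - Z) / Dz) * ((1 - A) * (1 - W) / Dw))
     = 1 + 2 * N / ((1 - Z) * (1 - W))"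
proof -
  have B: "1 - A \<noteq> 0" "1 - Z \<noteq> 0" "1 - W \<noteq> 0" "Dz \<noteq> 0" "Dw \<noteq> 0" using assms by auto
  have "((1 - A) * (1 - Z) / Dz) * ((1 - A) * (1 - W) / Dw) = (1 - A)\<^sup>2 * ((1 - Z) * (1 - W)) / (Dz * Dw)"
    by (simp add: power2_eq_square)
  moreover have "((1 - A)\<^sup>2 * N / (Dz * Dw)) / ((1 - A)\<^sup>2 * ((1 - Z) * (1 - W)) / (Dz * Dw)) = N / ((1 - Z) * (1 - W))"
    using B by simp
  ultimately have E: "((1 - A)\<^sup>2 * N / (Dz * Dw)) / (((1 - A) * (1 - Z) / Dz) * ((1 - A) * (1 - W) / Dw)) = N / ((1 - Z) * (1 - W))"
    by (simp only:)
  have "2 * ((1 - A)\<^sup>2 * N / (Dz * Dw)) / (((1 - A) * (1 - Z) / Dz) * ((1 - A) * (1 - W) / Dw))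
     = 2 * (((1 - A)\<^sup>2 * N / (Dz * Dw)) / (((1 - A) * (1 - Z) / Dz) * ((1 - A) * (1 - W) / Dw)))"
    by (rule times_divide_eq_right[symmetric])
  also have "\<dots> = 2 * (N / ((1 - Z) * (1 - W)))" by (simp only: E)
  also have "\<dots> = 2 * N / ((1 - Z) * (1 - W))" by (rule times_divide_eq_right)
  finally have F: "2 * ((1 - A)\<^sup>2 * N / (Dz * Dw)) / (((1 - A) * (1 - Z) / Dz) * ((1 - A) * (1 - W) / Dw)) = 2 * N / ((1 - Z) * (1 - W))" .
  show ?thesis by (simp only: F)
qed

lemma hq_mob:
  assumes "cmod a < 1" "cmod z < 1" "cmod w < 1"
  shows "hq (mob a z) (mob a w) = hq z w"
proof -
  have nz: "1 - cnj a * z \<noteq> 0" "1 - cnj a * w \<noteq> 0" using denom_nz assms by blast+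
  have p: "(cmod a)\<^sup>2 < 1" "(cmod z)\<^sup>2 < 1" "(cmod w)\<^sup>2 < 1" using assms by (simp_all add: abs_square_less_1)
  have d: "(cmod (1 - cnj a * z))\<^sup>2 > 0" "(cmod (1 - cnj a * w))\<^sup>2 > 0" using nz by simp_all
  have "hq (mob a z) (mob a w) = 1 + 2 * ((1 - (cmod a)\<^sup>2)\<^sup>2 * (cmod (z - w))\<^sup>2 / ((cmod (1 - cnj a * z))\<^sup>2 * (cmod (1 - cnj a * w))\<^sup>2))
     / (((1 - (cmod a)\<^sup>2) * (1 - (cmod z)\<^sup>2) / (cmod (1 - cnj a * z))\<^sup>2) * ((1 - (cmod a)\<^sup>2) * (1 - (cmod w)\<^sup>2) / (cmod (1 - cnj a * w))\<^sup>2))"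
    unfolding hq_def mob_diff[OF assms] mob_norm[OF assms(1,2)] mob_norm[OF assms(1,3)] by (rule refl)
  also have "\<dots> = hq z w" unfolding hq_def by (rule hq_aux[OF p d])
  finally show ?thesis .
qed

lemma hdist_mob:
  assumes "cmod a < 1" "cmod z < 1" "cmod w < 1"
  shows "hdist (mob a z) (mob a w) = hdist z w"
  using hq_mob[OF assms] by (simp add: hdist_hq)

lemma disk_sq: "cmod z < 1 \<Longrightarrow> (cmod z)\<^sup>2 < 1"
  by (simp add: abs_square_less_1)

lemma arcosh_mono:
  fixes x y :: real
  assumes "1 \<le> x" "x \<le> y"
  shows "arcosh x \<le> arcosh y"
proof (rule ccontr)
  have y: "1 \<le> y" using assms by linarith
  assume "\<not> arcosh x \<le> arcosh y"
  hence "arcosh y < arcosh x" by simp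
  hence "y < x" using assms(1) y by simp
  thus False using assms by simp
qed

lemma arsinh_mono:
  fixes x y :: real
  assumes "x \<le> y"
  shows "arsinh x \<le> arsinh y"
  using assms by (simp add: not_less[symmetric])

lemma hq_ge1:
  assumes "cmod z < 1" "cmod w < 1"
  shows "hq z w \<ge> 1"
proof -
  have "(1 - (cmod z)\<^sup>2) * (1 - (cmod w)\<^sup>2) > 0" using disk_sq[OF assms(1)] disk_sq[OF assms(2)] by simp
  thus ?thesis unfolding hq_def by simp
qed

lemma cosh_hdist:
  assumes "cmod z < 1" "cmod w < 1"
  shows "cosh (hdist z w) = hq z w"
  using hq_ge1[OF assms] by (simp add: hdist_hq)

lemma hdist_nonneg:
  assumes "cmod z < 1" "cmod w < 1"
  shows "hdist z w \<ge> 0"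
  using hq_ge1[OF assms] by (simp add: hdist_hq)

lemma hdist_sym: "hdist z w = hdist w z"
  unfolding hdist_def by (simp add: norm_minus_commute mult.commute)

lemma hdist_self: "cmod z < 1 \<Longrightarrow> hdist z z = 0"
  by (simp add: hdist_def)

lemma hq0: "cmod w < 1 \<Longrightarrow> hq 0 w = (1 + (cmod w)\<^sup>2) / (1 - (cmod w)\<^sup>2)"
  using disk_sq[of w] unfolding hq_def by (simp add: field_simps)

lemma sinh_hdist0:
  assumes "cmod w < 1"
  shows "sinh (hdist 0 w) = 2 * cmod w / (1 - (cmod w)\<^sup>2)"
proof -
  have p: "1 - (cmod w)\<^sup>2 > 0" using disk_sq[OF assms] by simp
  have ge: "(1 + (cmod w)\<^sup>2) / (1 - (cmod w)\<^sup>2) \<ge> 1" using p by simp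
  have "((1 + (cmod w)\<^sup>2) / (1 - (cmod w)\<^sup>2))\<^sup>2 - 1 = (2 * cmod w / (1 - (cmod w)\<^sup>2))\<^sup>2"
  proof -
    define P where "P = 1 - (cmod w)\<^sup>2"
    have P: "P \<noteq> 0" "(cmod w)\<^sup>2 = 1 - P" using p unfolding P_def by auto
    have "((1 + (cmod w)\<^sup>2) / P)\<^sup>2 - 1 = ((1 + (1 - P)) / P)\<^sup>2 - 1" using P(2) by simp
    also have "\<dots> = 4 * (1 - P) / P\<^sup>2" using P(1) by (simp add: field_simps power2_eq_square)
    also have "\<dots> = (2 * cmod w / P)\<^sup>2" using P by (simp add: power_divide power_mult_distrib)
    finally have "((1 + (cmod w)\<^sup>2) / P)\<^sup>2 - 1 = (2 * cmod w / P)\<^sup>2" .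
    thus ?thesis unfolding P_def .
  qed
  moreover have "2 * cmod w / (1 - (cmod w)\<^sup>2) \<ge> 0" using p by simp
  ultimately show ?thesis
    using ge p by (simp add: hdist_hq hq0[OF assms] sinh_arcosh_real)
qed

lemma cosh_hdist0:
  assumes "cmod w < 1"
  shows "cosh (hdist 0 w) = (1 + (cmod w)\<^sup>2) / (1 - (cmod w)\<^sup>2)"
  using cosh_hdist[of 0 w] assms hq0 by simp

lemma hdist0_arsinh:
  assumes "cmod w < 1"
  shows "hdist 0 w = arsinh (2 * cmod w / (1 - (cmod w)\<^sup>2))"
  using sinh_hdist0[OF assms] arsinh_sinh_real by metis

lemma hdist_triangle0:
  assumes "cmod y < 1" "cmod z < 1"
  shows "hdist y z \<le> hdist 0 y + hdist 0 z"
proof -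
  define Y where "Y = cmod y"
  define Z where "Z = cmod z"
  have Y: "0 \<le> Y" "Y\<^sup>2 < 1" and Z: "0 \<le> Z" "Z\<^sup>2 < 1" using assms disk_sq unfolding Y_def Z_def by auto
  have pY: "1 - Y\<^sup>2 > 0" and pZ: "1 - Z\<^sup>2 > 0" using Y Z by auto
  have "cosh (hdist 0 y + hdist 0 z) = cosh (hdist 0 y) * cosh (hdist 0 z) + sinh (hdist 0 y) * sinh (hdist 0 z)"
    by (rule cosh_add)
  also have "\<dots> = ((1 + Y\<^sup>2) * (1 + Z\<^sup>2) + 4 * Y * Z) / ((1 - Y\<^sup>2) * (1 - Z\<^sup>2))"
  proof -
    define P where "P = 1 - Y\<^sup>2"
    define Q where "Q = 1 - Z\<^sup>2"
    have "P \<noteq> 0" "Q \<noteq> 0" using pY pZ unfolding P_def Q_def by auto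
    hence "(1 + Y\<^sup>2) / P * ((1 + Z\<^sup>2) / Q) + 2 * Y / P * (2 * Z / Q) = ((1 + Y\<^sup>2) * (1 + Z\<^sup>2) + 4 * Y * Z) / (P * Q)"
      by (simp add: field_simps)
    thus ?thesis
      unfolding cosh_hdist0[OF assms(1)] cosh_hdist0[OF assms(2)] sinh_hdist0[OF assms(1)] sinh_hdist0[OF assms(2)] Y_def[symmetric] Z_def[symmetric] P_def Q_def .
  qed
  also have "\<dots> = 1 + 2 * (Y + Z)\<^sup>2 / ((1 - Y\<^sup>2) * (1 - Z\<^sup>2))"
  proof -
    have n: "(1 + Y\<^sup>2) * (1 + Z\<^sup>2) + 4 * Y * Z = (1 - Y\<^sup>2) * (1 - Z\<^sup>2) + 2 * (Y + Z)\<^sup>2"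
      by (simp add: algebra_simps power2_eq_square)
    have "(1 - Y\<^sup>2) * (1 - Z\<^sup>2) \<noteq> 0" using pY pZ by simp
    thus ?thesis unfolding n by (simp add: add_divide_distrib)
  qed
  also have "\<dots> \<ge> hq y z"
  proof -
    have "cmod (y - z) \<le> Y + Z" unfolding Y_def Z_def by (rule norm_triangle_ineq4)
    hence "(cmod (y - z))\<^sup>2 \<le> (Y + Z)\<^sup>2" by (simp add: power_mono)
    thus ?thesis unfolding hq_def Y_def[symmetric] Z_def[symmetric] using pY pZ
      by (simp add: divide_right_mono)
  qed
  finally have "hq y z \<le> cosh (hdist 0 y + hdist 0 z)" .
  moreover have "hdist 0 y + hdist 0 z \<ge> 0" using hdist_nonneg assms by (simp add: add_nonneg_nonneg)
  ultimately have "arcosh (hq y z) \<le> arcosh (cosh (hdist 0 y + hdist 0 z))"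
    using hq_ge1[OF assms] by (intro arcosh_mono)
  thus ?thesis using \<open>hdist 0 y + hdist 0 z \<ge> 0\<close> by (simp add: hdist_hq arcosh_cosh_real)
qed

lemma hdist_triangle:
  assumes "cmod x < 1" "cmod y < 1" "cmod z < 1"
  shows "hdist y z \<le> hdist y x + hdist x z"
proof -
  have "hdist y z = hdist (mob x y) (mob x z)" using hdist_mob assms by simp
  also have "\<dots> \<le> hdist 0 (mob x y) + hdist 0 (mob x z)"
    using hdist_triangle0 mob_in_disk assms by simp
  also have "hdist 0 (mob x y) = hdist x y" using hdist_mob[of x x y] assms mob_self by simp
  also have "hdist 0 (mob x z) = hdist x z" using hdist_mob[of x x z] assms mob_self by simp
  finally show ?thesis using hdist_sym by simp
qed

definition hH :: "real \<Rightarrow> complex \<Rightarrow> complex \<Rightarrow> real" where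
  "hH A c z = A * (cmod z)\<^sup>2 - 2 * Re (cnj c * z) + A"

definition Lg :: "real \<Rightarrow> complex \<Rightarrow> complex set" where
  "Lg A c = {z. cmod z < 1 \<and> hH A c z = 0}"

definition TA :: "complex \<Rightarrow> real \<Rightarrow> complex \<Rightarrow> real" where
  "TA a A c = A * (1 + (cmod a)\<^sup>2) + 2 * Re (cnj c * a)"

definition Tc :: "complex \<Rightarrow> real \<Rightarrow> complex \<Rightarrow> complex" where
  "Tc a A c = c + cnj c * a\<^sup>2 + 2 * of_real A * a"

lemma cnj_mob: "cnj (mob a z) = (cnj z - cnj a) / (1 - a * cnj z)"
  by (simp add: mob_def)

lemma hH_cx: "complex_of_real (hH A c z) = of_real A * (z * cnj z) - (cnj c * z + c * cnj z) + of_real A"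
  by (simp add: hH_def complex_eq_iff cmod_power2; simp add: algebra_simps power2_eq_square)

lemma TA_cx: "complex_of_real (TA a A c) = of_real A * (1 + a * cnj a) + (cnj c * a + c * cnj a)"
  by (simp add: TA_def complex_eq_iff cmod_power2; simp add: algebra_simps power2_eq_square)

lemma cnj_Tc: "cnj (Tc a A c) = cnj c + c * (cnj a)\<^sup>2 + 2 * of_real A * cnj a"
  by (simp add: Tc_def)

lemma hH_mob:
  assumes "cmod a < 1" "cmod z < 1"
  shows "hH A c (mob a z) * (cmod (1 - cnj a * z))\<^sup>2 = hH (TA a A c) (Tc a A c) z"
proof -
  have nz: "1 - cnj a * z \<noteq> 0" using denom_nz assms by blast
  have nz': "1 - a * cnj z \<noteq> 0" using nz complex_cnj_zero_iff[of "1 - cnj a * z"] by simp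
  define m where "m = mob a z"
  define d where "d = 1 - cnj a * z"
  define d' where "d' = 1 - a * cnj z"
  have md: "m * d = z - a" using nz unfolding m_def d_def mob_def by simp
  have md': "cnj m * d' = cnj z - cnj a" using nz' unfolding m_def d'_def cnj_mob by simp
  have "complex_of_real (hH A c m * (cmod (1 - cnj a * z))\<^sup>2)
      = (of_real A * (m * cnj m) - (cnj c * m + c * cnj m) + of_real A) * (d * d')"
    unfolding of_real_mult hH_cx cnorm_sq' d_def d'_def by simp
  also have "\<dots> = of_real A * ((m * d) * (cnj m * d')) - (cnj c * (m * d) * d' + c * (cnj m * d') * d) + of_real A * (d * d')"
    by algebra
  also have "\<dots> = of_real A * ((z - a) * (cnj z - cnj a)) - (cnj c * (z - a) * d' + c * (cnj z - cnj a) * d) + of_real A * (d * d')"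
    unfolding md md' ..
  also have "\<dots> = complex_of_real (hH (TA a A c) (Tc a A c) z)"
    unfolding hH_cx TA_cx cnj_Tc d_def d'_def by (simp add: Tc_def power2_eq_square) algebra
  finally show ?thesis unfolding m_def by (simp only: of_real_eq_iff)
qed

lemma Delta_T:
  "(cmod (Tc a A c))\<^sup>2 - (TA a A c)\<^sup>2 = (1 - (cmod a)\<^sup>2)\<^sup>2 * ((cmod c)\<^sup>2 - A\<^sup>2)"
proof -
  have "complex_of_real ((cmod (Tc a A c))\<^sup>2 - (TA a A c)\<^sup>2) = Tc a A c * cnj (Tc a A c) - (complex_of_real (TA a A c))\<^sup>2"
    by (simp add: cnorm_sq)
  also have "\<dots> = (1 - a * cnj a)\<^sup>2 * (c * cnj c - (of_real A)\<^sup>2)"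
    unfolding TA_cx cnj_Tc by (simp add: Tc_def power2_eq_square) algebra
  also have "\<dots> = complex_of_real ((1 - (cmod a)\<^sup>2)\<^sup>2 * ((cmod c)\<^sup>2 - A\<^sup>2))"
    by (simp add: cnorm_sq)
  finally show ?thesis by (simp only: of_real_eq_iff)
qed

lemma TA_minus: "TA (-q) A c = hH A c q"
  by (simp add: TA_def hH_def algebra_simps)

lemma Lg_T_iff:
  assumes "cmod a < 1"
  shows "w \<in> Lg (TA a A c) (Tc a A c) \<longleftrightarrow> cmod w < 1 \<and> mob a w \<in> Lg A c"
proof (cases "cmod w < 1")
  case True
  have nz: "1 - cnj a * w \<noteq> 0" using denom_nz assms True by blast
  hence "(cmod (1 - cnj a * w))\<^sup>2 \<noteq> 0" by simp
  thus ?thesis using hH_mob[OF assms True, of A c] mob_in_disk[OF assms True] True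
    unfolding Lg_def by auto
qed (simp add: Lg_def)

lemma hH_norm_id: "(cmod (of_real A * w - c))\<^sup>2 = A * hH A c w + (cmod c)\<^sup>2 - A\<^sup>2"
proof -
  have "complex_of_real ((cmod (of_real A * w - c))\<^sup>2) = (of_real A * w - c) * (of_real A * cnj w - cnj c)"
    by (simp add: cnorm_sq)
  also have "\<dots> = of_real A * (of_real A * (w * cnj w) - (cnj c * w + c * cnj w) + of_real A) + c * cnj c - (of_real A)\<^sup>2"
    by (simp add: power2_eq_square) algebra
  also have "\<dots> = complex_of_real (A * hH A c w + (cmod c)\<^sup>2 - A\<^sup>2)"
    by (simp add: hH_cx cnorm_sq)
  finally show ?thesis by (simp only: of_real_eq_iff)
qed

lemma frac_mono:
  fixes x y :: real
  assumes "0 \<le> x" "x \<le> y" "y < 1"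
  shows "2 * x / (1 - x\<^sup>2) \<le> 2 * y / (1 - y\<^sup>2)"
proof -
  have x1: "x < 1" using assms by simp
  have px: "1 - x\<^sup>2 > 0" using assms x1 by (simp add: abs_square_less_1)
  have py: "1 - y\<^sup>2 > 0" using assms by (simp add: abs_square_less_1)
  have "0 \<le> (y - x) * (1 + x * y)" using assms by simp
  hence "2 * x * (1 - y\<^sup>2) \<le> 2 * y * (1 - x\<^sup>2)" by (simp add: algebra_simps power2_eq_square)
  thus ?thesis using px py by (simp add: divide_simps)
qed

lemma hdist0_mono:
  assumes "cmod w < 1" "0 \<le> r" "r \<le> cmod w"
  shows "arsinh (2 * r / (1 - r\<^sup>2)) \<le> hdist 0 w"
  unfolding hdist0_arsinh[OF assms(1)] using assms frac_mono arsinh_mono by simp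

lemma dist0:
  assumes D: "(cmod c)\<^sup>2 - A\<^sup>2 > 0"
  shows "(\<exists>w \<in> Lg A c. hdist 0 w = arsinh (\<bar>A\<bar> / sqrt ((cmod c)\<^sup>2 - A\<^sup>2)))
       \<and> (\<forall>w \<in> Lg A c. arsinh (\<bar>A\<bar> / sqrt ((cmod c)\<^sup>2 - A\<^sup>2)) \<le> hdist 0 w)"
proof (cases "A = 0")
  case True
  have "0 \<in> Lg A c" using True by (simp add: Lg_def hH_def)
  moreover have "hdist 0 0 = 0" by (simp add: hdist_self)
  moreover have "\<forall>w \<in> Lg A c. 0 \<le> hdist 0 w" using hdist_nonneg by (simp add: Lg_def)
  ultimately show ?thesis using True by auto
next
  case False
  define Dl where "Dl = sqrt ((cmod c)\<^sup>2 - A\<^sup>2)"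
  have Dl2: "Dl\<^sup>2 = (cmod c)\<^sup>2 - A\<^sup>2" using D unfolding Dl_def by simp
  have Dlpos: "Dl > 0" using D unfolding Dl_def by simp
  have Ac: "\<bar>A\<bar> < cmod c"
  proof -
    have "\<bar>A\<bar>\<^sup>2 < (cmod c)\<^sup>2" using D by simp
    thus ?thesis by (rule power_less_imp_less_base) simp
  qed
  have Apos: "\<bar>A\<bar> > 0" using False by simp
  have Dlc: "Dl < cmod c"
  proof -
    have "Dl\<^sup>2 < (cmod c)\<^sup>2" using Dl2 False by simp
    thus ?thesis using Dlpos by (simp add: power_less_imp_less_base)
  qed
  define r0 where "r0 = (cmod c - Dl) / \<bar>A\<bar>"
  have r0pos: "r0 > 0" unfolding r0_def using Dlc Apos by simp
  have r01: "r0 < 1"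
  proof -
    have "(cmod c - \<bar>A\<bar>)\<^sup>2 < Dl\<^sup>2"
      unfolding Dl2 using Ac Apos mult_strict_left_mono[OF Ac Apos] by (simp add: power2_eq_square algebra_simps abs_mult_self_eq)
    hence "cmod c - \<bar>A\<bar> < Dl" using Dlpos by (simp add: power_less_imp_less_base)
    thus ?thesis unfolding r0_def using Apos by (simp add: divide_simps)
  qed
  have val: "2 * r0 / (1 - r0\<^sup>2) = \<bar>A\<bar> / Dl"
  proof -
    have A2: "\<bar>A\<bar>\<^sup>2 = (cmod c)\<^sup>2 - Dl\<^sup>2" using Dl2 by simp
    have e1: "1 - r0\<^sup>2 = 2 * Dl * (cmod c - Dl) / \<bar>A\<bar>\<^sup>2"
      unfolding r0_def using Apos Dl2 by (simp add: field_simps A2) (simp add: power2_eq_square algebra_simps)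
    define K where "K = cmod c - Dl"
    define B where "B = \<bar>A\<bar>"
    have K: "K > 0" "B > 0" unfolding K_def B_def using Dlc Apos by auto
    have "2 * (K / B) / (2 * Dl * K / B\<^sup>2) = B / Dl" using K Dlpos by (simp add: field_simps power2_eq_square)
    thus ?thesis unfolding e1 unfolding r0_def K_def B_def .
  qed
  have lower: "\<forall>w \<in> Lg A c. arsinh (\<bar>A\<bar> / Dl) \<le> hdist 0 w"
  proof
    fix w assume w: "w \<in> Lg A c"
    have wd: "cmod w < 1" and h0: "hH A c w = 0" using w by (auto simp: Lg_def)
    have "(cmod (of_real A * w - c))\<^sup>2 = Dl\<^sup>2" using hH_norm_id[of A w c] h0 Dl2 by simp
    hence e: "cmod (of_real A * w - c) = Dl" using Dlpos by (simp add: power2_eq_iff_nonneg)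
    have "cmod c - Dl \<le> cmod (of_real A * w)"
      using norm_triangle_ineq2[of c "of_real A * w"] e by (simp add: norm_minus_commute)
    hence "cmod c - Dl \<le> \<bar>A\<bar> * cmod w" by (simp add: norm_mult)
    hence "r0 \<le> cmod w" unfolding r0_def using Apos by (simp add: divide_simps mult.commute)
    hence "arsinh (2 * r0 / (1 - r0\<^sup>2)) \<le> hdist 0 w" using r0pos by (intro hdist0_mono[OF wd]) simp_all
    thus "arsinh (\<bar>A\<bar> / Dl) \<le> hdist 0 w" by (simp only: val)
  qed
  define w0 where "w0 = complex_of_real (sgn A * r0 / cmod c) * c"
  have cpos: "cmod c > 0" using Ac by linarith
  have w0n: "cmod w0 = r0" unfolding w0_def using cpos r0pos False by (simp add: norm_mult norm_divide abs_mult sgn_if)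
  have "of_real A * w0 - c = complex_of_real (\<bar>A\<bar> * r0 / cmod c - 1) * c"
    unfolding w0_def using False by (simp add: algebra_simps sgn_if abs_if)
  moreover have "\<bar>A\<bar> * r0 / cmod c - 1 = - Dl / cmod c" unfolding r0_def using Apos cpos by (simp add: field_simps)
  ultimately have "cmod (of_real A * w0 - c) = Dl" using cpos Dlpos by (simp add: norm_mult norm_divide)
  hence "A * hH A c w0 = 0" using hH_norm_id[of A w0 c] Dl2 by simp
  hence w0L: "w0 \<in> Lg A c" using False w0n r01 by (simp add: Lg_def)
  have "hdist 0 w0 = arsinh (\<bar>A\<bar> / Dl)" using hdist0_arsinh[of w0] w0n r01 val by simp
  thus ?thesis using lower w0L unfolding Dl_def by blast
qed

definition dval :: "real \<Rightarrow> complex \<Rightarrow> complex \<Rightarrow> real" where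
  "dval A c q = arsinh (\<bar>hH A c q\<bar> / ((1 - (cmod q)\<^sup>2) * sqrt ((cmod c)\<^sup>2 - A\<^sup>2)))"

lemma dist_gen:
  assumes q: "cmod q < 1" and D: "(cmod c)\<^sup>2 - A\<^sup>2 > 0"
  shows "(\<exists>p \<in> Lg A c. hdist q p = dval A c q) \<and> (\<forall>p \<in> Lg A c. dval A c q \<le> hdist q p)"
proof -
  define A' where "A' = TA (-q) A c"
  define c' where "c' = Tc (-q) A c"
  have mq: "cmod (-q) < 1" using q by simp
  have pq: "1 - (cmod q)\<^sup>2 > 0" using disk_sq[OF q] by simp
  have D': "(cmod c')\<^sup>2 - A'\<^sup>2 = (1 - (cmod q)\<^sup>2)\<^sup>2 * ((cmod c)\<^sup>2 - A\<^sup>2)"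
    unfolding A'_def c'_def using Delta_T[of "-q" A c] by simp
  have D'pos: "(cmod c')\<^sup>2 - A'\<^sup>2 > 0" unfolding D' using pq D by simp
  have val: "arsinh (\<bar>A'\<bar> / sqrt ((cmod c')\<^sup>2 - A'\<^sup>2)) = dval A c q"
  proof -
    have "sqrt ((cmod c')\<^sup>2 - A'\<^sup>2) = (1 - (cmod q)\<^sup>2) * sqrt ((cmod c)\<^sup>2 - A\<^sup>2)"
      unfolding D' using pq by (simp add: real_sqrt_mult)
    thus ?thesis unfolding dval_def A'_def TA_minus by simp
  qed
  have LT: "w \<in> Lg A' c' \<longleftrightarrow> cmod w < 1 \<and> mob (-q) w \<in> Lg A c" for w
    unfolding A'_def c'_def by (rule Lg_T_iff[OF mq])
  note d0 = dist0[OF D'pos, unfolded val]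
  have hq: "hdist q p = hdist 0 (mob q p)" if "cmod p < 1" for p
    using hdist_mob[OF q q that] mob_self by simp
  have lower: "\<forall>p \<in> Lg A c. dval A c q \<le> hdist q p"
  proof
    fix p assume p: "p \<in> Lg A c"
    have pd: "cmod p < 1" using p by (simp add: Lg_def)
    have "mob q p \<in> Lg A' c'" using LT mob_inv[OF q pd] mob_in_disk[OF q pd] p by simp
    thus "dval A c q \<le> hdist q p" using d0 hq[OF pd] by simp
  qed
  obtain w0 where w0: "w0 \<in> Lg A' c'" "hdist 0 w0 = dval A c q" using d0 by blast
  have w0d: "cmod w0 < 1" using w0 by (simp add: Lg_def)
  define p0 where "p0 = mob (-q) w0"
  have p0L: "p0 \<in> Lg A c" using LT w0 unfolding p0_def by simp
  have p0d: "cmod p0 < 1" using p0L by (simp add: Lg_def)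
  have "mob q p0 = w0" unfolding p0_def using mob_inv[OF mq w0d] by simp
  hence "hdist q p0 = dval A c q" using hq[OF p0d] w0 by simp
  thus ?thesis using lower p0L by blast
qed

lemma hdist_set_Lg:
  assumes q: "cmod q < 1" and D: "(cmod c)\<^sup>2 - A\<^sup>2 > 0"
  shows "hdist_set q (Lg A c) = dval A c q"
proof -
  note dg = dist_gen[OF assms]
  show ?thesis unfolding hdist_set_def
    by (rule cInf_eq_minimum) (use dg in force)+
qed

lemma hdist_set_attained:
  assumes q: "cmod q < 1" and D: "(cmod c)\<^sup>2 - A\<^sup>2 > 0"
  shows "\<exists>p \<in> Lg A c. hdist q p = hdist_set q (Lg A c)"
  using dist_gen[OF assms] hdist_set_Lg[OF assms] by simp

lemma sinh_hdist_set:
  assumes q: "cmod q < 1" and D: "(cmod c)\<^sup>2 - A\<^sup>2 > 0"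
  shows "sinh (hdist_set q (Lg A c)) = \<bar>hH A c q\<bar> / ((1 - (cmod q)\<^sup>2) * sqrt ((cmod c)\<^sup>2 - A\<^sup>2))"
  using hdist_set_Lg[OF assms] by (simp add: dval_def)

lemma pdisk_iff: "z \<in> pdisk \<longleftrightarrow> cmod z < 1"
  by (simp add: pdisk_def)

lemma re_eq_norm_par:
  assumes "Re (a * cnj b) = cmod a * cmod b"
  shows "a * of_real (cmod b) = of_real (cmod a) * b"
proof (cases "b = 0")
  case True thus ?thesis by simp
next
  case False
  define z where "z = a * cnj b"
  have cz: "cmod z = Re z" using assms unfolding z_def by (simp add: norm_mult)
  have "(cmod z)\<^sup>2 = (Re z)\<^sup>2 + (Im z)\<^sup>2" by (rule cmod_power2)
  hence "Im z = 0" using cz by simp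
  hence zr: "z = of_real (cmod a * cmod b)" using assms unfolding z_def by (simp add: complex_eq_iff)
  have "a * of_real (cmod b) * of_real (cmod b) = a * (of_real (cmod b))\<^sup>2"
    by (simp add: power2_eq_square)
  also have "\<dots> = a * (cnj b * b)" by (simp only: cnorm_sq mult_ac)
  finally have "a * of_real (cmod b) * of_real (cmod b) = a * (cnj b * b)" .
  also have "\<dots> = z * b" unfolding z_def by (simp add: mult.assoc)
  also have "\<dots> = of_real (cmod a) * b * of_real (cmod b)" unfolding zr by simp
  finally have "a * of_real (cmod b) * of_real (cmod b) = of_real (cmod a) * b * of_real (cmod b)" .
  moreover have "complex_of_real (cmod b) \<noteq> 0" using False by simp
  ultimately show ?thesis using mult_right_cancel by blast
qed

lemma norm_diff_sq: "(cmod (a - b))\<^sup>2 = (cmod a)\<^sup>2 + (cmod b)\<^sup>2 - 2 * Re (a * cnj b)"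
  by (simp only: cmod_power2) (simp add: algebra_simps power2_eq_square)

lemma diam_Lg:
  assumes v: "cmod v = 1"
  shows "Lg 0 (\<i> * v) = {complex_of_real x * v | x. \<bar>x\<bar> < 1}"
proof -
  have vv: "cnj v * v = 1"
  proof -
    have "complex_of_real ((cmod v)\<^sup>2) = v * cnj v" by (rule cnorm_sq')
    thus ?thesis using v by (simp add: mult_ac)
  qed
  have h: "hH 0 (\<i> * v) w = - 2 * Im (cnj v * w)" for w
    by (simp add: hH_def)
  show ?thesis
  proof (intro set_eqI iffI)
    fix w assume "w \<in> Lg 0 (\<i> * v)"
    hence w: "cmod w < 1" "Im (cnj v * w) = 0" unfolding Lg_def h by auto
    define x where "x = Re (cnj v * w)"
    have "cnj v * w = of_real x" using w(2) unfolding x_def by (simp add: complex_eq_iff)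
    hence e: "v * (cnj v * w) = v * of_real x" by simp
    have "w = (cnj v * v) * w" using vv by simp
    also have "\<dots> = v * (cnj v * w)" by (simp only: mult_ac)
    finally have wx: "w = of_real x * v" unfolding e by (simp only: mult_ac)
    have "\<bar>x\<bar> < 1" using w(1) v unfolding wx by (simp add: norm_mult)
    thus "w \<in> {complex_of_real x * v | x. \<bar>x\<bar> < 1}" using wx by blast
  next
    fix w assume "w \<in> {complex_of_real x * v | x. \<bar>x\<bar> < 1}"
    then obtain x where x: "w = of_real x * v" "\<bar>x\<bar> < 1" by blast
    have "cnj v * w = of_real x * (cnj v * v)" unfolding x(1) by (simp only: mult_ac)
    hence cw: "cnj v * w = of_real x" using vv by simp
    have "Im (cnj v * w) = 0" by (simp only: cw) simp
    moreover have "cmod w < 1" using x v by (simp add: norm_mult)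
    ultimately show "w \<in> Lg 0 (\<i> * v)" unfolding Lg_def h by simp
  qed
qed

lemma pos_from_mult:
  fixes P M Q :: real
  assumes "P * M = Q" "M > 0" "Q > 0" shows "P > 0"
proof -
  have "P = Q / M" using assms by (simp add: field_simps)
  thus ?thesis using assms by simp
qed

lemma neg_from_mult:
  fixes P M Q :: real
  assumes "P * M = Q" "M > 0" "Q < 0" shows "P < 0"
proof -
  have "P = Q / M" using assms by (simp add: field_simps)
  thus ?thesis using assms by (simp add: divide_neg_pos)
qed

lemma geo_class:
  assumes "hgeodesic G"
  shows "\<exists>A c. (cmod c)\<^sup>2 - A\<^sup>2 > 0 \<and> G = Lg A c"
proof -
  obtain f where fd: "\<And>t. cmod (f t) < 1" and fh: "\<And>s t. hdist (f s) (f t) = \<bar>s - t\<bar>" and G: "G = range f"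
    using assms unfolding hgeodesic_def pdisk_iff by blast
  define a where "a = f 0"
  have ad: "cmod a < 1" using fd a_def by simp
  define g where "g t = mob a (f t)" for t
  have gd: "cmod (g t) < 1" for t using mob_in_disk ad fd g_def by simp
  have gh: "hdist (g s) (g t) = \<bar>s - t\<bar>" for s t using hdist_mob[OF ad fd fd] fh g_def by simp
  have g0: "g 0 = 0" using mob_self a_def g_def by simp
  define X where "X t = (cmod (g t))\<^sup>2" for t
  have X1: "X t < 1" "0 \<le> X t" for t using disk_sq[OF gd] X_def by auto
  have cg: "cosh t = (1 + X t) / (1 - X t)" for t
  proof -
    have "cosh (hdist 0 (g t)) = cosh t" using gh[of 0 t] g0 by simp
    thus ?thesis using cosh_hdist0[OF gd] X_def by simp
  qed
  have Xc: "X t * (1 + cosh t) = cosh t - 1" for t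
  proof -
    have "1 - X t \<noteq> 0" using X1(1)[of t] by simp
    thus ?thesis unfolding cg[of t] by (simp add: field_simps)
  qed
  have cross: "cosh (s - t) * ((1 - X s) * (1 - X t)) = (1 - X s) * (1 - X t) + 2 * (X s + X t - 2 * Re (g s * cnj (g t)))" for s t
  proof -
    have nz: "(1 - X s) * (1 - X t) \<noteq> 0" using X1(1)[of s] X1(1)[of t] by simp
    have "cosh (s - t) = hq (g s) (g t)" using cosh_hdist[OF gd gd, of s t] gh by simp
    also have "\<dots> = 1 + 2 * (X s + X t - 2 * Re (g s * cnj (g t))) / ((1 - X s) * (1 - X t))"
      unfolding hq_def X_def norm_diff_sq ..
    finally show ?thesis using nz by (simp add: field_simps)
  qed
  have Pst: "Re (g s * cnj (g t)) * ((1 + cosh s) * (1 + cosh t)) = sinh s * sinh t" for s t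
    using Xc[of s] Xc[of t] cross[of s t] cosh_diff[of s t] by algebra
  have Pabs: "\<bar>Re (g s * cnj (g t))\<bar> = cmod (g s) * cmod (g t)" for s t
  proof -
    have M: "(1 + cosh s) * (1 + cosh t) > 0" using cosh_real_pos[of s] cosh_real_pos[of t] by (intro mult_pos_pos) linarith+
    have "(Re (g s * cnj (g t)) * ((1 + cosh s) * (1 + cosh t)))\<^sup>2 = (sinh s)\<^sup>2 * (sinh t)\<^sup>2"
      using Pst[of s t] by (simp add: power_mult_distrib)
    also have "\<dots> = ((cosh s)\<^sup>2 - 1) * ((cosh t)\<^sup>2 - 1)" by (simp add: cosh_square_eq)
    also have "\<dots> = (X s * X t) * ((1 + cosh s) * (1 + cosh t))\<^sup>2"
      using Xc[of s] Xc[of t] by (simp add: power2_eq_square) algebra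
    finally have "(Re (g s * cnj (g t)))\<^sup>2 * ((1 + cosh s) * (1 + cosh t))\<^sup>2 = (X s * X t) * ((1 + cosh s) * (1 + cosh t))\<^sup>2"
      by (simp add: power_mult_distrib)
    moreover have "1 + cosh s \<noteq> 0" "1 + cosh t \<noteq> 0" using cosh_real_pos[of s] cosh_real_pos[of t] by linarith+
    ultimately have "(Re (g s * cnj (g t)))\<^sup>2 = X s * X t" by simp
    hence "\<bar>Re (g s * cnj (g t))\<bar>\<^sup>2 = (cmod (g s) * cmod (g t))\<^sup>2" unfolding X_def by (simp add: power_mult_distrib)
    from power2_eq_imp_eq[OF this] show ?thesis by simp
  qed
  have c1: "cosh (1::real) > 1" using cosh_real_strict_mono[of 0 "1::real"] by simp
  have X1pos: "X 1 > 0"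
  proof -
    have "X 1 * (1 + cosh 1) > 0" using Xc[of 1] c1 by simp
    thus ?thesis using cosh_real_pos[of 1] by (simp add: zero_less_mult_iff)
  qed
  hence g1: "cmod (g 1) > 0" unfolding X_def by simp
  define v where "v = g 1 / of_real (cmod (g 1))"
  have vn: "cmod v = 1" unfolding v_def using g1 by (simp add: norm_divide)
  have gform: "g s = of_real (sgn s * cmod (g s)) * v" for s
  proof -
    have M: "(1 + cosh s) * (1 + cosh 1) > 0" using cosh_real_pos[of s] cosh_real_pos[of 1] by (intro mult_pos_pos) linarith+
    have g1c: "complex_of_real (cmod (g 1)) \<noteq> 0" using g1 by simp
    consider "s > 0" | "s < 0" | "s = 0" by linarith
    thus ?thesis
    proof cases
      case 1
      have "sinh s * sinh 1 > 0" using 1 by simp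
      hence "Re (g s * cnj (g 1)) > 0" by (rule pos_from_mult[OF Pst[of s 1] M])
      hence "Re (g s * cnj (g 1)) = cmod (g s) * cmod (g 1)" using Pabs[of s 1] by simp
      hence "g s * of_real (cmod (g 1)) = of_real (cmod (g s)) * g 1" by (rule re_eq_norm_par)
      hence "g s = of_real (cmod (g s)) * g 1 / of_real (cmod (g 1))" using g1c by (simp add: field_simps)
      thus ?thesis using 1 unfolding v_def by simp
    next
      case 2
      have "sinh s * sinh 1 < 0" using 2 by (simp add: mult_neg_pos)
      hence "Re (g s * cnj (g 1)) < 0" by (rule neg_from_mult[OF Pst[of s 1] M])
      hence "Re ((- g s) * cnj (g 1)) = cmod (- g s) * cmod (g 1)" using Pabs[of s 1] by simp
      hence "(- g s) * of_real (cmod (g 1)) = of_real (cmod (- g s)) * g 1" by (rule re_eq_norm_par)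
      hence "g s * of_real (cmod (g 1)) = - of_real (cmod (g s)) * g 1" by (simp add: minus_equation_iff[of "g s * _"])
      hence "g s = - of_real (cmod (g s)) * g 1 / of_real (cmod (g 1))" using g1c by (simp add: field_simps)
      thus ?thesis using 2 unfolding v_def by simp
    next
      case 3 thus ?thesis using g0 by simp
    qed
  qed
  have rg: "range g = {complex_of_real x * v | x. \<bar>x\<bar> < 1}"
  proof (intro set_eqI iffI)
    fix w assume "w \<in> range g"
    then obtain s where s: "w = g s" by blast
    have "\<bar>sgn s * cmod (g s)\<bar> < 1" using gd[of s] by (simp add: abs_mult sgn_if)
    thus "w \<in> {complex_of_real x * v | x. \<bar>x\<bar> < 1}" using gform[of s] s by blast
  next
    fix w assume "w \<in> {complex_of_real x * v | x. \<bar>x\<bar> < 1}"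
    then obtain x where x: "w = of_real x * v" "\<bar>x\<bar> < 1" by blast
    have x2: "x\<^sup>2 < 1" using x(2) by (simp add: abs_square_less_1)
    define y where "y = (1 + x\<^sup>2) / (1 - x\<^sup>2)"
    have y1: "y \<ge> 1" unfolding y_def using x2 by simp
    define t where "t = sgn x * arcosh y"
    have ct: "cosh t = y" unfolding t_def using y1 by (auto simp add: sgn_if y_def)
    have "X t * (1 + y) = y - 1" using Xc[of t] ct by simp
    moreover have "x\<^sup>2 * (1 + y) = y - 1" unfolding y_def using x2 by (simp add: field_simps)
    moreover have "1 + y > 0" using y1 by simp
    ultimately have "X t = x\<^sup>2" by (metis mult_right_cancel less_irrefl)
    hence "(cmod (g t))\<^sup>2 = \<bar>x\<bar>\<^sup>2" unfolding X_def by simp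
    from power2_eq_imp_eq[OF this] have gt: "cmod (g t) = \<bar>x\<bar>" by simp
    have "sgn t = sgn x"
    proof (cases "x = 0")
      case True thus ?thesis unfolding t_def by simp
    next
      case False
      hence "y \<noteq> 1" unfolding y_def using x2 by (simp add: field_simps)
      hence "arcosh y > 0" using y1 by simp
      thus ?thesis unfolding t_def by (simp add: sgn_mult)
    qed
    hence "g t = w" using gform[of t] gt x(1) by (simp add: sgn_mult_abs)
    thus "w \<in> range g" by (metis rangeI)
  qed
  define A where "A = TA a 0 (\<i> * v)"
  define c where "c = Tc a 0 (\<i> * v)"
  have D: "(cmod c)\<^sup>2 - A\<^sup>2 > 0"
  proof -
    have "(cmod c)\<^sup>2 - A\<^sup>2 = (1 - (cmod a)\<^sup>2)\<^sup>2" unfolding A_def c_def Delta_T using vn by (simp add: norm_mult)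
    moreover have "1 - (cmod a)\<^sup>2 > 0" using disk_sq[OF ad] by simp
    ultimately show ?thesis by simp
  qed
  have LT: "z \<in> Lg A c \<longleftrightarrow> cmod z < 1 \<and> mob a z \<in> range g" for z
    unfolding A_def c_def Lg_T_iff[OF ad] rg diam_Lg[OF vn] ..
  have "G = Lg A c"
  proof (intro set_eqI iffI)
    fix z assume "z \<in> G"
    then obtain t where "z = f t" using G by blast
    thus "z \<in> Lg A c" unfolding LT using fd g_def by auto
  next
    fix z assume "z \<in> Lg A c"
    hence z: "cmod z < 1" "mob a z \<in> range g" unfolding LT by auto
    then obtain t where "mob a z = mob a (f t)" unfolding g_def by blast
    hence "mob (-a) (mob a z) = mob (-a) (mob a (f t))" by simp
    hence "z = f t" using mob_inv[OF ad z(1)] mob_inv[OF ad fd] by simp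
    thus "z \<in> G" using G by simp
  qed
  thus ?thesis using D by blast
qed

lemma hgeo_ne: "hgeodesic G \<Longrightarrow> G \<noteq> {}"
  unfolding hgeodesic_def by auto

lemma Lg_scale:
  assumes "A \<noteq> 0"
  shows "Lg A c = Lg 1 (c / of_real A)" "hH A c z = A * hH 1 (c / of_real A) z"
proof -
  show h: "hH A c z = A * hH 1 (c / of_real A) z" for z
    using assms by (simp add: hH_def algebra_simps; simp add: field_simps)
  show "Lg A c = Lg 1 (c / of_real A)" unfolding Lg_def h using assms by simp
qed

lemma Lg1_sphere:
  assumes "z \<in> Lg 1 c" "(cmod c)\<^sup>2 - 1 > 0"
  shows "z \<in> sphere c (sqrt ((cmod c)\<^sup>2 - 1))"
proof -
  have h: "hH 1 c z = 0" using assms by (simp add: Lg_def)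
  have "(cmod (z - c))\<^sup>2 = (cmod z)\<^sup>2 + (cmod c)\<^sup>2 - 2 * Re (z * cnj c)" by (rule norm_diff_sq)
  also have "Re (z * cnj c) = Re (cnj c * z)" by (simp add: mult.commute)
  finally have "(cmod (z - c))\<^sup>2 = (cmod c)\<^sup>2 - 1" using h by (simp add: hH_def)
  hence "cmod (z - c) = sqrt ((cmod c)\<^sup>2 - 1)" by (metis norm_ge_zero real_sqrt_abs abs_of_nonneg)
  thus ?thesis by (simp add: dist_norm norm_minus_commute)
qed

lemma H_line:
  assumes "cmod u = 1"
  shows "hH 1 c (of_real t * u) = t\<^sup>2 - 2 * t * Re (cnj u * c) + 1"
  using assms by (simp add: hH_def norm_mult power_mult_distrib algebra_simps)

lemma uu: "cmod u = 1 \<Longrightarrow> u * cnj u = 1"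
  using cnorm_sq'[of u] by simp

lemma H_w:
  assumes "cmod u = 1"
  shows "hH 1 c z = (Re (cnj u * z))\<^sup>2 + (Im (cnj u * z))\<^sup>2 - 2 * (Re (cnj u * c) * Re (cnj u * z) + Im (cnj u * c) * Im (cnj u * z)) + 1"
proof -
  have n: "cmod (cnj u * z) = cmod z" using assms by (simp add: norm_mult)
  have "cnj (cnj u * c) * (cnj u * z) = (u * cnj u) * (cnj c * z)" by (simp add: mult_ac)
  hence e: "cnj (cnj u * c) * (cnj u * z) = cnj c * z" using uu[OF assms] by simp
  have "Re (cnj c * z) = Re (cnj u * c) * Re (cnj u * z) + Im (cnj u * c) * Im (cnj u * z)"
    unfolding e[symmetric] by (simp; simp add: algebra_simps)
  moreover have "(cmod z)\<^sup>2 = (Re (cnj u * z))\<^sup>2 + (Im (cnj u * z))\<^sup>2" unfolding n[symmetric] by (rule cmod_power2)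
  ultimately show ?thesis by (simp add: hH_def)
qed

lemma side_lemma:
  fixes a b X Y :: real
  assumes "\<bar>a\<bar> \<le> 1" "X\<^sup>2 + Y\<^sup>2 < 1" "X\<^sup>2 + Y\<^sup>2 - 2 * (a * X + b * Y) + 1 = 0"
  shows "b * Y > 0"
proof -
  have X1: "\<bar>X\<bar> < 1"
  proof -
    have "X\<^sup>2 < 1" using assms(2) by (smt (verit) zero_le_power2)
    thus ?thesis by (simp add: abs_square_less_1)
  qed
  have "a * X \<le> \<bar>a\<bar> * \<bar>X\<bar>" by (metis abs_ge_self abs_mult)
  also have "\<dots> \<le> \<bar>X\<bar>" using assms(1) by (simp add: mult_left_le_one_le)
  finally have aX: "a * X \<le> \<bar>X\<bar>" .
  have "0 < (1 - \<bar>X\<bar>)\<^sup>2" using X1 by simp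
  also have "(1 - \<bar>X\<bar>)\<^sup>2 = X\<^sup>2 - 2 * \<bar>X\<bar> + 1" by (simp add: power2_eq_square algebra_simps)
  finally have "0 < X\<^sup>2 - 2 * (a * X) + 1" using aX by linarith
  moreover have "0 \<le> Y\<^sup>2" by simp
  moreover have "X\<^sup>2 + Y\<^sup>2 - 2 * (a * X) + 1 = 2 * (b * Y)" using assms(3) by (simp add: algebra_simps)
  ultimately show ?thesis by linarith
qed

lemma conv_pos:
  fixes t al be :: real
  assumes "al > 0" "be > 0" "0 \<le> t" "t \<le> 1"
  shows "(1 - t) * al + t * be > 0"
proof (cases "t = 0")
  case True thus ?thesis using assms by simp
next
  case False
  hence "t * be > 0" using assms by simp
  moreover have "(1 - t) * al \<ge> 0" using assms by simp
  ultimately show ?thesis by linarith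
qed

lemma three_pts:
  fixes a1 a2 :: real
  assumes "\<And>t. \<bar>t\<bar> < 1 \<Longrightarrow> \<bar>t\<^sup>2 - 2 * t * a1 + 1\<bar> = \<bar>t\<^sup>2 - 2 * t * a2 + 1\<bar>"
  shows "a1 = a2"
proof -
  have "\<bar>(1/2)\<^sup>2 - 2 * (1/2) * a1 + 1\<bar> = \<bar>(1/2)\<^sup>2 - 2 * (1/2) * a2 + 1\<bar>" by (rule assms) simp
  hence e1: "a1 = a2 \<or> a1 + a2 = 5/2" by (simp add: power2_eq_square abs_if split: if_splits) linarith?
  have "\<bar>(1/3)\<^sup>2 - 2 * (1/3) * a1 + 1\<bar> = \<bar>(1/3)\<^sup>2 - 2 * (1/3) * a2 + 1\<bar>" by (rule assms) simp
  hence e2: "a1 = a2 \<or> a1 + a2 = 10/3" by (simp add: power2_eq_square abs_if split: if_splits) linarith?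
  have "\<bar>(1/4)\<^sup>2 - 2 * (1/4) * a1 + 1\<bar> = \<bar>(1/4)\<^sup>2 - 2 * (1/4) * a2 + 1\<bar>" by (rule assms) simp
  hence e3: "a1 = a2 \<or> a1 + a2 = 17/4" by (simp add: power2_eq_square abs_if split: if_splits) linarith?
  show ?thesis using e1 e2 e3 by linarith
qed

lemma arsinh_le_2x:
  fixes y :: real
  assumes "0 \<le> y"
  shows "arsinh y \<le> 2 * y"
proof -
  have p: "0 < y + sqrt (y\<^sup>2 + 1)" using arsinh_real_aux by simp
  have "sqrt (y\<^sup>2 + 1) \<le> y + 1"
    using assms by (intro real_le_lsqrt) (simp_all add: power2_eq_square algebra_simps)
  moreover have "ln (y + sqrt (y\<^sup>2 + 1)) \<le> y + sqrt (y\<^sup>2 + 1) - 1" using ln_le_minus_one[OF p] .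
  ultimately show ?thesis unfolding arsinh_real_def by linarith
qed

lemma hs_lower:
  assumes "S \<noteq> {}" "T \<noteq> {}" "\<And>p q. p \<in> S \<Longrightarrow> q \<in> T \<Longrightarrow> m \<le> hdist p q"
  shows "m \<le> hdist_sets S T"
  unfolding hdist_sets_def using assms by (intro cInf_greatest) auto

lemma hs_upper:
  assumes "p \<in> S" "q \<in> T" "\<And>p q. p \<in> S \<Longrightarrow> q \<in> T \<Longrightarrow> m \<le> hdist p q"
  shows "hdist_sets S T \<le> hdist p q"
  unfolding hdist_sets_def using assms by (intro cInf_lower) (auto simp: bdd_below_def)

lemma onevar:
  fixes a x s :: real
  assumes "\<bar>a\<bar> \<le> 1" "s = sqrt (1 - a\<^sup>2)"
  shows "(1 + s) * ((x\<^sup>2 - 2 * x * a + 1) - s * (1 - x\<^sup>2)) = ((1 + s) * x - a)\<^sup>2"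
    and "s * (1 - x\<^sup>2) \<le> x\<^sup>2 - 2 * x * a + 1"
proof -
  have a2: "a\<^sup>2 \<le> 1" using assms(1) abs_square_le_1 by blast
  have s0: "s \<ge> 0" using assms a2 by simp
  have s2: "s\<^sup>2 = 1 - a\<^sup>2" using assms a2 by simp
  show e: "(1 + s) * ((x\<^sup>2 - 2 * x * a + 1) - s * (1 - x\<^sup>2)) = ((1 + s) * x - a)\<^sup>2"
  proof -
    have "(1 + s) * ((x\<^sup>2 - 2 * x * a + 1) - s * (1 - x\<^sup>2)) = (1 + s)\<^sup>2 * x\<^sup>2 - 2 * (1 + s) * x * a + (1 - s\<^sup>2)"
      by (simp add: power2_eq_square algebra_simps)
    also have "\<dots> = ((1 + s) * x - a)\<^sup>2" unfolding s2 by (simp add: power2_eq_square algebra_simps)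
    finally show ?thesis .
  qed
  have "0 \<le> (1 + s) * ((x\<^sup>2 - 2 * x * a + 1) - s * (1 - x\<^sup>2))" unfolding e by simp
  hence "0 \<le> (x\<^sup>2 - 2 * x * a + 1) - s * (1 - x\<^sup>2)" using s0 by (simp add: zero_le_mult_iff)
  thus "s * (1 - x\<^sup>2) \<le> x\<^sup>2 - 2 * x * a + 1" by simp
qed

lemma core:
  fixes c1 c2 u :: complex and r1 r2 rho1 rho2 :: real
  assumes u: "cmod u = 1" and c1: "(cmod c1)\<^sup>2 - 1 > 0" and c2: "(cmod c2)\<^sup>2 - 1 > 0"
    and rho1_def: "rho1 = sqrt ((cmod c1)\<^sup>2 - 1)" and rho2_def: "rho2 = sqrt ((cmod c2)\<^sup>2 - 1)"
    and r1: "r1 > 0" and r2: "r2 > 0"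
    and disj: "Lg 1 c1 \<inter> Lg 1 c2 = {}" and ne1: "Lg 1 c1 \<noteq> {}" and ne2: "Lg 1 c2 \<noteq> {}"
    and loc: "\<And>q. cmod q < 1 \<Longrightarrow> (r1 * \<bar>hH 1 c1 q\<bar> / rho1 = r2 * \<bar>hH 1 c2 q\<bar> / rho2 \<longleftrightarrow> Im (cnj u * q) = 0)"
  shows "rho1 / rho2 = r1 / r2 \<and> inversive_distance c1 rho1 c2 rho2 = cosh (hdist_sets (Lg 1 c1) (Lg 1 c2))"
proof -
  have rho1: "rho1 > 0" "rho1\<^sup>2 = (cmod c1)\<^sup>2 - 1" using c1 unfolding rho1_def by simp_all
  have rho2: "rho2 > 0" "rho2\<^sup>2 = (cmod c2)\<^sup>2 - 1" using c2 unfolding rho2_def by simp_all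
  define e1 where "e1 = cnj u * c1"
  define e2 where "e2 = cnj u * c2"
  define a1 where "a1 = Re e1"
  define b1 where "b1 = Im e1"
  define a2 where "a2 = Re e2"
  define b2 where "b2 = Im e2"
  have uc: "u * cnj u = 1" "cnj u * u = 1" using uu[OF u] by (simp_all add: mult.commute)
  have ce1: "c1 = u * e1" unfolding e1_def using uc by (simp add: mult.assoc[symmetric])
  have ce2: "c2 = u * e2" unfolding e2_def using uc by (simp add: mult.assoc[symmetric])
  have ne1': "(cmod c1)\<^sup>2 = a1\<^sup>2 + b1\<^sup>2" unfolding ce1 a1_def b1_def using u by (simp add: norm_mult cmod_power2)
  have ne2': "(cmod c2)\<^sup>2 = a2\<^sup>2 + b2\<^sup>2" unfolding ce2 a2_def b2_def using u by (simp add: norm_mult cmod_power2)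
  have Hl1: "hH 1 c1 (of_real t * u) = t\<^sup>2 - 2 * t * a1 + 1" for t unfolding a1_def e1_def by (rule H_line[OF u])
  have Hl2: "hH 1 c2 (of_real t * u) = t\<^sup>2 - 2 * t * a2 + 1" for t unfolding a2_def e2_def by (rule H_line[OF u])
  have lineIm: "Im (cnj u * (of_real t * u)) = 0" for t
  proof -
    have "cnj u * (of_real t * u) = of_real t * (cnj u * u)" by (simp only: mult_ac)
    thus ?thesis using uc by simp
  qed
  have linen: "cmod (of_real t * u) = \<bar>t\<bar>" for t using u by (simp add: norm_mult)
  have online: "r1 * \<bar>t\<^sup>2 - 2 * t * a1 + 1\<bar> / rho1 = r2 * \<bar>t\<^sup>2 - 2 * t * a2 + 1\<bar> / rho2" if "\<bar>t\<bar> < 1" for t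
    using loc[of "of_real t * u"] that linen lineIm Hl1 Hl2 by simp
  have nocommon: False if "cmod q < 1" "Im (cnj u * q) = 0" "hH 1 c1 q = 0" for q
  proof -
    have "r2 * \<bar>hH 1 c2 q\<bar> / rho2 = 0" using loc[OF that(1)] that by simp
    hence "hH 1 c2 q = 0" using r2 rho2 by simp
    hence "q \<in> Lg 1 c1 \<inter> Lg 1 c2" using that by (simp add: Lg_def)
    thus False using disj by simp
  qed
  have k: "r1 / rho1 = r2 / rho2" using online[of 0] by simp
  have kpos: "r2 / rho2 > 0" using r2 rho2 by simp
  have eqabs: "\<bar>t\<^sup>2 - 2 * t * a1 + 1\<bar> = \<bar>t\<^sup>2 - 2 * t * a2 + 1\<bar>" if "\<bar>t\<bar> < 1" for t
  proof -
    have "(r1 / rho1) * \<bar>t\<^sup>2 - 2 * t * a1 + 1\<bar> = (r2 / rho2) * \<bar>t\<^sup>2 - 2 * t * a2 + 1\<bar>"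
      using online[OF that] by simp
    thus ?thesis unfolding k using kpos r2 rho2(1) by simp
  qed
  have a12: "a1 = a2" by (rule three_pts) (rule eqabs)
  define a where "a = a1"
  have aa: "a1 = a" "a2 = a" using a12 a_def by simp_all
  have ale: "\<bar>a\<bar> \<le> 1"
  proof (rule ccontr)
    assume "\<not> \<bar>a\<bar> \<le> 1"
    hence a1': "a\<^sup>2 > 1" using abs_square_le_1[of a] by linarith
    define sq where "sq = sqrt (a\<^sup>2 - 1)"
    have sq: "sq \<ge> 0" "sq\<^sup>2 = a\<^sup>2 - 1" using a1' unfolding sq_def by simp_all
    have sqa: "sq < \<bar>a\<bar>"
    proof -
      have "sq\<^sup>2 < \<bar>a\<bar>\<^sup>2" using sq by simp
      thus ?thesis by (rule power_less_imp_less_base) simp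
    qed
    have sqa1: "\<bar>a\<bar> - 1 < sq"
    proof -
      have "(\<bar>a\<bar> - 1)\<^sup>2 < sq\<^sup>2" unfolding sq(2) using \<open>\<not> \<bar>a\<bar> \<le> 1\<close>
        by (simp add: power2_eq_square algebra_simps)
      thus ?thesis using sq(1) by (rule power_less_imp_less_base)
    qed
    define x where "x = (if a > 0 then a - sq else a + sq)"
    have x1: "\<bar>x\<bar> < 1" unfolding x_def using sqa sqa1 sq(1) by (auto simp: abs_if split: if_splits)
    have "x\<^sup>2 - 2 * x * a + 1 = (x - a)\<^sup>2 - (a\<^sup>2 - 1)" by (simp add: power2_eq_square algebra_simps)
    also have "(x - a)\<^sup>2 = sq\<^sup>2" unfolding x_def by (simp add: power2_eq_square)
    finally have "x\<^sup>2 - 2 * x * a + 1 = 0" using sq(2) by simp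
    hence "hH 1 c1 (of_real x * u) = 0" using Hl1 aa by simp
    thus False using nocommon[of "of_real x * u"] linen x1 lineIm by simp
  qed
  have Hw1: "hH 1 c1 z = (Re (cnj u * z))\<^sup>2 + (Im (cnj u * z))\<^sup>2 - 2 * (a * Re (cnj u * z) + b1 * Im (cnj u * z)) + 1" for z
    using H_w[OF u, of c1 z] aa unfolding a1_def b1_def e1_def by simp
  have Hw2: "hH 1 c2 z = (Re (cnj u * z))\<^sup>2 + (Im (cnj u * z))\<^sup>2 - 2 * (a * Re (cnj u * z) + b2 * Im (cnj u * z)) + 1" for z
    using H_w[OF u, of c2 z] aa unfolding a2_def b2_def e2_def by simp
  have Hdiff: "hH 1 c2 z - hH 1 c1 z = 2 * (b1 - b2) * Im (cnj u * z)" for z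
    unfolding Hw1 Hw2 by (simp add: algebra_simps)
  have wn: "(Re (cnj u * z))\<^sup>2 + (Im (cnj u * z))\<^sup>2 = (cmod z)\<^sup>2" for z
    using u cmod_power2[of "cnj u * z"] by (simp add: norm_mult)
  have side1: "b1 * Im (cnj u * p) > 0" if "p \<in> Lg 1 c1" for p
  proof -
    have "cmod p < 1" "hH 1 c1 p = 0" using that by (auto simp: Lg_def)
    thus ?thesis using side_lemma[OF ale, of "Re (cnj u * p)" "Im (cnj u * p)" b1] Hw1[of p] wn[of p] disk_sq by simp
  qed
  have side2: "b2 * Im (cnj u * p) > 0" if "p \<in> Lg 1 c2" for p
  proof -
    have "cmod p < 1" "hH 1 c2 p = 0" using that by (auto simp: Lg_def)
    thus ?thesis using side_lemma[OF ale, of "Re (cnj u * p)" "Im (cnj u * p)" b2] Hw2[of p] wn[of p] disk_sq by simp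
  qed
  have bne: "b1 \<noteq> b2"
  proof
    assume "b1 = b2"
    hence "e1 = e2" using aa unfolding a1_def a2_def b1_def b2_def by (simp add: complex_eq_iff)
    hence "c1 = c2" using ce1 ce2 by simp
    thus False using disj ne1 by simp
  qed
  have opp: "b1 * b2 < 0"
  proof (rule ccontr)
    assume nopp: "\<not> b1 * b2 < 0"
    obtain p1 where p1: "p1 \<in> Lg 1 c1" using ne1 by blast
    obtain p2 where p2: "p2 \<in> Lg 1 c2" using ne2 by blast
    define Y1 where "Y1 = Im (cnj u * p1)"
    define Y2 where "Y2 = Im (cnj u * p2)"
    have s1: "b1 * Y1 > 0" using side1[OF p1] Y1_def by simp
    have s2: "b2 * Y2 > 0" using side2[OF p2] Y2_def by simp
    have "b1 * b2 \<noteq> 0" using s1 s2 by auto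
    hence bb: "b1 * b2 > 0" using nopp by linarith
    have "(b1 * Y1) * (b2 * Y2) > 0" by (rule mult_pos_pos[OF s1 s2])
    moreover have "(b1 * Y1) * (b2 * Y2) = (b1 * b2) * (Y1 * Y2)" by (simp only: mult_ac)
    ultimately have "(b1 * b2) * (Y1 * Y2) > 0" by simp
    hence YY: "Y1 * Y2 > 0" using bb by (simp add: zero_less_mult_iff)
    have p1d: "cmod p1 < 1" "hH 1 c1 p1 = 0" using p1 by (auto simp: Lg_def)
    have p2d: "cmod p2 < 1" "hH 1 c2 p2 = 0" using p2 by (auto simp: Lg_def)
    define P where "P t = p1 + of_real t * (p2 - p1)" for t :: real
    define phi where "phi t = hH 1 c1 (P t) + hH 1 c2 (P t)" for t
    have phi0: "phi 0 = 2 * (b1 - b2) * Y1" unfolding phi_def P_def using Hdiff[of p1] p1d Y1_def by simp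
    have phi1: "phi 1 = - (2 * (b1 - b2) * Y2)" unfolding phi_def P_def using Hdiff[of p2] p2d Y2_def by simp
    have "phi 0 * phi 1 = - (4 * (b1 - b2)\<^sup>2 * (Y1 * Y2))" unfolding phi0 phi1 by (simp add: power2_eq_square algebra_simps)
    moreover have "(b1 - b2)\<^sup>2 > 0" using bne by simp
    ultimately have pp: "phi 0 * phi 1 < 0" using YY by (simp add: mult_pos_pos)
    have cont: "continuous_on {0..1} phi"
      unfolding phi_def P_def hH_def by (intro continuous_intros)
    obtain t0 where t0: "0 \<le> t0" "t0 \<le> 1" "phi t0 = 0"
    proof (cases "phi 0 \<le> 0")
      case True
      have "phi 1 \<ge> 0"
      proof (rule ccontr)
        assume "\<not> 0 \<le> phi 1"
        hence "0 \<le> phi 0 * phi 1" using True by (intro mult_nonpos_nonpos) auto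
        thus False using pp by simp
      qed
      thus ?thesis using IVT'[of phi 0 0 1] True cont that by auto
    next
      case False
      have "phi 1 \<le> 0"
      proof (rule ccontr)
        assume "\<not> phi 1 \<le> 0"
        hence "0 \<le> phi 0 * phi 1" using False by (intro mult_nonneg_nonneg) auto
        thus False using pp by simp
      qed
      thus ?thesis using IVT2'[of phi 1 0 0] False cont that by auto
    qed
    define q0 where "q0 = P t0"
    have q0c: "q0 = of_real (1 - t0) * p1 + of_real t0 * p2" unfolding q0_def P_def by (simp add: algebra_simps)
    have q0d: "cmod q0 < 1"
    proof -
      have "cmod q0 \<le> cmod (of_real (1 - t0) * p1) + cmod (of_real t0 * p2)"
        unfolding q0c by (rule norm_triangle_ineq)
      also have "\<dots> = (1 - t0) * cmod p1 + t0 * cmod p2" using t0 by (simp add: norm_mult del: of_real_diff)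
      finally have "cmod q0 \<le> (1 - t0) * cmod p1 + t0 * cmod p2" .
      moreover have "(1 - t0) * (1 - cmod p1) + t0 * (1 - cmod p2) > 0"
        using conv_pos[of "1 - cmod p1" "1 - cmod p2" t0] p1d p2d t0 by simp
      ultimately show ?thesis by (simp add: algebra_simps)
    qed
    have "hH 1 c1 q0 = - hH 1 c2 q0" using t0(3) unfolding phi_def q0_def by simp
    hence eqa: "\<bar>hH 1 c1 q0\<bar> = \<bar>hH 1 c2 q0\<bar>" by simp
    have "r1 * \<bar>hH 1 c1 q0\<bar> / rho1 = (r1 / rho1) * \<bar>hH 1 c1 q0\<bar>" by simp
    also have "\<dots> = (r2 / rho2) * \<bar>hH 1 c2 q0\<bar>" unfolding k eqa ..
    also have "\<dots> = r2 * \<bar>hH 1 c2 q0\<bar> / rho2" by simp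
    finally have "r1 * \<bar>hH 1 c1 q0\<bar> / rho1 = r2 * \<bar>hH 1 c2 q0\<bar> / rho2" .
    hence Im0: "Im (cnj u * q0) = 0" using loc[OF q0d] by simp
    have "Im (cnj u * q0) = (1 - t0) * Y1 + t0 * Y2" unfolding q0c Y1_def Y2_def by (simp add: algebra_simps)
    moreover have "(1 - t0) * Y1 + t0 * Y2 \<noteq> 0"
    proof (cases "Y1 > 0")
      case True
      hence "Y2 > 0" using YY by (simp add: zero_less_mult_iff)
      hence "(1 - t0) * Y1 + t0 * Y2 > 0" using conv_pos[OF True _ t0(1,2)] by blast
      thus ?thesis by simp
    next
      case False
      hence "Y1 < 0" using YY by (cases "Y1 = 0") auto
      hence "Y2 < 0" using YY by (simp add: zero_less_mult_iff)
      have "(1 - t0) * (- Y1) + t0 * (- Y2) > 0" using conv_pos[of "-Y1" "-Y2" t0] \<open>Y1 < 0\<close> \<open>Y2 < 0\<close> t0 by simp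
      thus ?thesis by simp
    qed
    ultimately show False using Im0 by simp
  qed
  define s where "s = sqrt (1 - a\<^sup>2)"
  have a2le: "a\<^sup>2 \<le> 1" using ale abs_square_le_1 by blast
  have s0: "s \<ge> 0" "s\<^sup>2 = 1 - a\<^sup>2" unfolding s_def using a2le by simp_all
  have rb1: "rho1\<^sup>2 = a\<^sup>2 + b1\<^sup>2 - 1" using rho1(2) ne1' aa by simp
  have rb2: "rho2\<^sup>2 = a\<^sup>2 + b2\<^sup>2 - 1" using rho2(2) ne2' aa by simp
  have cdiff: "cmod (c1 - c2) = \<bar>b1 - b2\<bar>"
  proof -
    have "e1 - e2 = complex_of_real (b1 - b2) * \<i>" using aa unfolding a1_def a2_def b1_def b2_def by (simp add: complex_eq_iff)
    moreover have "c1 - c2 = u * (e1 - e2)" unfolding ce1 ce2 by (simp add: right_diff_distrib)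
    ultimately have "c1 - c2 = u * (complex_of_real (b1 - b2) * \<i>)" by simp
    thus ?thesis using u by (simp add: norm_mult del: of_real_diff)
  qed
  have ID: "inversive_distance c1 rho1 c2 rho2 = (1 - a\<^sup>2 - b1 * b2) / (rho1 * rho2)"
  proof -
    have "(cmod (c1 - c2))\<^sup>2 - rho1\<^sup>2 - rho2\<^sup>2 = 2 * (1 - a\<^sup>2 - b1 * b2)"
      unfolding cdiff rb1 rb2 by (simp add: power2_eq_square algebra_simps)
    note nn = this
    show ?thesis unfolding inversive_distance_def nn using rho1 rho2 by (simp add: field_simps)
  qed
  define sD where "sD = s * \<bar>b1 - b2\<bar> / (rho1 * rho2)"
  have IDpos: "1 - a\<^sup>2 - b1 * b2 > 0" using a2le opp by simp
  have coshD: "cosh (arsinh sD) = (1 - a\<^sup>2 - b1 * b2) / (rho1 * rho2)"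
  proof -
    have poly: "(1 - a\<^sup>2 - b1 * b2)\<^sup>2 = s\<^sup>2 * (b1 - b2)\<^sup>2 + rho1\<^sup>2 * rho2\<^sup>2"
      unfolding s0(2) rb1 rb2 by (simp add: power2_eq_square algebra_simps)
    have rr: "rho1 * rho2 > 0" using rho1 rho2 by simp
    have "sD\<^sup>2 + 1 = (s\<^sup>2 * (b1 - b2)\<^sup>2 + rho1\<^sup>2 * rho2\<^sup>2) / (rho1 * rho2)\<^sup>2"
      unfolding sD_def using rr rho1(1) rho2(1) by (simp add: field_simps power2_eq_square)
    also have "\<dots> = ((1 - a\<^sup>2 - b1 * b2) / (rho1 * rho2))\<^sup>2" unfolding poly[symmetric] by (simp add: power_divide)
    finally have "sD\<^sup>2 + 1 = ((1 - a\<^sup>2 - b1 * b2) / (rho1 * rho2))\<^sup>2" .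
    moreover have "(1 - a\<^sup>2 - b1 * b2) / (rho1 * rho2) > 0" using IDpos rr by simp
    ultimately show ?thesis using IDpos rr by (simp add: cosh_arsinh_real)
  qed
  have sq1: "(cmod c1)\<^sup>2 - 1\<^sup>2 > 0" "(cmod c2)\<^sup>2 - 1\<^sup>2 > 0" using c1 c2 by simp_all
  have dv1: "dval 1 c1 z = arsinh (\<bar>hH 1 c1 z\<bar> / ((1 - (cmod z)\<^sup>2) * rho1))" for z
    unfolding dval_def rho1_def by simp
  have dv2: "dval 1 c2 z = arsinh (\<bar>hH 1 c2 z\<bar> / ((1 - (cmod z)\<^sup>2) * rho2))" for z
    unfolding dval_def rho2_def by simp
  have diamD: "(cmod (\<i> * u))\<^sup>2 - 0\<^sup>2 > 0" using u by (simp add: norm_mult)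
  have dvd: "dval 0 (\<i> * u) z = arsinh (2 * \<bar>Im (cnj u * z)\<bar> / (1 - (cmod z)\<^sup>2))" for z
  proof -
    have hd: "hH 0 (\<i> * u) z = - 2 * Im (cnj u * z)" by (simp add: hH_def algebra_simps)
    show ?thesis unfolding dval_def hd abs_mult using u by (simp add: norm_mult)
  qed
  have lower: "arsinh sD \<le> hdist p q" if p: "p \<in> Lg 1 c1" and q: "q \<in> Lg 1 c2" for p q
  proof -
    have pd: "cmod p < 1" "hH 1 c1 p = 0" using p by (auto simp: Lg_def)
    have pp: "1 - (cmod p)\<^sup>2 > 0" using disk_sq[OF pd(1)] by simp
    define Y where "Y = Im (cnj u * p)"
    obtain x0 where x0: "x0 \<in> Lg 0 (\<i> * u)" "hdist p x0 = dval 0 (\<i> * u) p"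
      using dist_gen[OF pd(1) diamD] by blast
    obtain x where x: "x0 = of_real x * u" "\<bar>x\<bar> < 1" using x0(1) unfolding diam_Lg[OF u] by blast
    have x0d: "cmod x0 < 1" using x linen by simp
    have px: "1 - x\<^sup>2 > 0" using x(2) by (simp add: abs_square_less_1)
    have "dval 1 c1 x0 \<le> hdist x0 p" using dist_gen[OF x0d sq1(1)] p by blast
    moreover have "dval 1 c1 x0 = arsinh (\<bar>x\<^sup>2 - 2 * x * a + 1\<bar> / ((1 - x\<^sup>2) * rho1))"
      unfolding dv1 x(1) Hl1 linen aa by simp
    moreover have "s / rho1 \<le> \<bar>x\<^sup>2 - 2 * x * a + 1\<bar> / ((1 - x\<^sup>2) * rho1)"
    proof -
      have "s * (1 - x\<^sup>2) \<le> \<bar>x\<^sup>2 - 2 * x * a + 1\<bar>" using onevar(2)[OF ale s_def, of x] by linarith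
      hence "s * (1 - x\<^sup>2) / ((1 - x\<^sup>2) * rho1) \<le> \<bar>x\<^sup>2 - 2 * x * a + 1\<bar> / ((1 - x\<^sup>2) * rho1)"
        using px rho1 by (intro divide_right_mono) simp_all
      thus ?thesis using px by simp
    qed
    ultimately have "arsinh (s / rho1) \<le> hdist p x0" using arsinh_mono hdist_sym[of x0 p] by (metis order_trans)
    hence "arsinh (s / rho1) \<le> arsinh (2 * \<bar>Y\<bar> / (1 - (cmod p)\<^sup>2))" using x0(2) dvd Y_def by simp
    hence sY: "s / rho1 \<le> 2 * \<bar>Y\<bar> / (1 - (cmod p)\<^sup>2)" by (simp add: not_less[symmetric])
    have "hH 1 c2 p = 2 * (b1 - b2) * Y" using Hdiff[of p] pd Y_def by simp
    hence hab: "\<bar>hH 1 c2 p\<bar> = 2 * \<bar>b1 - b2\<bar> * \<bar>Y\<bar>" by (simp only: abs_mult)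
    have "\<bar>hH 1 c2 p\<bar> / ((1 - (cmod p)\<^sup>2) * rho2) = (\<bar>b1 - b2\<bar> / rho2) * (2 * \<bar>Y\<bar> / (1 - (cmod p)\<^sup>2))"
      unfolding hab using pp rho2(1) by (simp add: field_simps)
    moreover have "(\<bar>b1 - b2\<bar> / rho2) * (s / rho1) \<le> (\<bar>b1 - b2\<bar> / rho2) * (2 * \<bar>Y\<bar> / (1 - (cmod p)\<^sup>2))"
      using sY rho2 by (intro mult_left_mono) simp_all
    moreover have "(\<bar>b1 - b2\<bar> / rho2) * (s / rho1) = sD" unfolding sD_def by (simp add: field_simps)
    ultimately have "sD \<le> \<bar>hH 1 c2 p\<bar> / ((1 - (cmod p)\<^sup>2) * rho2)" by simp
    hence "arsinh sD \<le> dval 1 c2 p" unfolding dv2 by (rule arsinh_mono)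
    also have "dval 1 c2 p \<le> hdist p q" using dist_gen[OF pd(1) sq1(2)] q by blast
    finally show ?thesis .
  qed
  have up: "hdist_sets (Lg 1 c1) (Lg 1 c2) \<le> dval 1 c1 (of_real x * u) + dval 1 c2 (of_real x * u)" if x: "\<bar>x\<bar> < 1" for x
  proof -
    define x0 where "x0 = of_real x * u"
    have x0d: "cmod x0 < 1" using x linen x0_def by simp
    obtain p1 where p1: "p1 \<in> Lg 1 c1" "hdist x0 p1 = dval 1 c1 x0" using dist_gen[OF x0d sq1(1)] by blast
    obtain p2 where p2: "p2 \<in> Lg 1 c2" "hdist x0 p2 = dval 1 c2 x0" using dist_gen[OF x0d sq1(2)] by blast
    have "cmod p1 < 1" "cmod p2 < 1" using p1 p2 by (auto simp: Lg_def)
    hence "hdist p1 p2 \<le> hdist p1 x0 + hdist x0 p2" using hdist_triangle x0d by blast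
    hence "hdist p1 p2 \<le> dval 1 c1 x0 + dval 1 c2 x0" using p1 p2 hdist_sym[of p1 x0] by simp
    moreover have "hdist_sets (Lg 1 c1) (Lg 1 c2) \<le> hdist p1 p2" using hs_upper[OF p1(1) p2(1)] lower by blast
    ultimately show ?thesis unfolding x0_def by simp
  qed
  have dvx1: "dval 1 c1 (of_real x * u) = arsinh (\<bar>x\<^sup>2 - 2 * x * a + 1\<bar> / ((1 - x\<^sup>2) * rho1))" for x
    unfolding dv1 Hl1 linen aa by simp
  have dvx2: "dval 1 c2 (of_real x * u) = arsinh (\<bar>x\<^sup>2 - 2 * x * a + 1\<bar> / ((1 - x\<^sup>2) * rho2))" for x
    unfolding dv2 Hl2 linen aa by simp
  have upper: "hdist_sets (Lg 1 c1) (Lg 1 c2) \<le> arsinh sD"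
  proof (cases "a\<^sup>2 < 1")
    case True
    have a1: "\<bar>a\<bar> < 1" using True by (simp add: abs_square_less_1)
    define x0 where "x0 = a / (1 + s)"
    have x0: "\<bar>x0\<bar> < 1" unfolding x0_def using a1 s0 by (simp add: abs_divide divide_less_eq)
    have px: "1 - x0\<^sup>2 > 0" using x0 by (simp add: abs_square_less_1)
    have "(1 + s) * x0 - a = 0" unfolding x0_def using s0 by simp
    hence "(1 + s) * ((x0\<^sup>2 - 2 * x0 * a + 1) - s * (1 - x0\<^sup>2)) = 0" using onevar(1)[OF ale s_def, of x0] by simp
    hence g: "x0\<^sup>2 - 2 * x0 * a + 1 = s * (1 - x0\<^sup>2)" using s0 by simp
    have vk: "\<bar>x0\<^sup>2 - 2 * x0 * a + 1\<bar> / ((1 - x0\<^sup>2) * rho) = s / rho" for rho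
      unfolding g using px s0 by (simp add: abs_mult)
    have sb: "sqrt ((s / rho)\<^sup>2 + 1) = \<bar>b\<bar> / rho" if "rho > 0" "rho\<^sup>2 = a\<^sup>2 + b\<^sup>2 - 1" for rho b
    proof -
      have "(s / rho)\<^sup>2 + 1 = (\<bar>b\<bar> / rho)\<^sup>2" using that s0 by (simp add: field_simps power2_eq_square)
      thus ?thesis using that by simp
    qed
    have babs: "\<bar>b1 - b2\<bar> = \<bar>b1\<bar> + \<bar>b2\<bar>" using opp by (auto simp: abs_if mult_less_0_iff)
    have "sinh (arsinh (s / rho1) + arsinh (s / rho2)) = (s / rho1) * (\<bar>b2\<bar> / rho2) + (\<bar>b1\<bar> / rho1) * (s / rho2)"
      unfolding sinh_add cosh_arsinh_real sinh_arsinh_real sb[OF rho1(1) rb1] sb[OF rho2(1) rb2] ..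
    also have "\<dots> = sD" unfolding sD_def babs by (simp add: field_simps add_divide_distrib)
    finally have "arsinh (s / rho1) + arsinh (s / rho2) = arsinh sD" by (metis arsinh_sinh_real)
    thus ?thesis using up[OF x0] dvx1 dvx2 vk by simp
  next
    case False
    hence a2: "a\<^sup>2 = 1" using a2le by simp
    hence sz: "s = 0" unfolding s_def by simp
    hence sDz: "sD = 0" unfolding sD_def by simp
    have "hdist_sets (Lg 1 c1) (Lg 1 c2) \<le> 0 + e" if e: "e > 0" for e
    proof -
      define K where "K = 2 / rho1 + 2 / rho2"
      have K: "K > 0" unfolding K_def using rho1(1) rho2(1) by (simp add: add_pos_pos)
      define d where "d = min 1 (e / K)"
      have d: "0 < d" "d \<le> 1" "d * K \<le> e" unfolding d_def using e K by (auto simp: min_def field_simps)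
      define x where "x = a * (1 - d)"
      have ax: "\<bar>a\<bar> = 1" using a2 by (simp add: abs_square_eq_1)
      have x1: "\<bar>x\<bar> < 1" unfolding x_def using ax d by (simp add: abs_mult)
      have xx: "x\<^sup>2 = (1 - d)\<^sup>2" unfolding x_def power_mult_distrib a2 by simp
      have xa: "x * a = 1 - d"
      proof -
        have "x * a = a\<^sup>2 * (1 - d)" unfolding x_def by (simp add: power2_eq_square)
        thus ?thesis using a2 by simp
      qed
      have "x\<^sup>2 - 2 * x * a + 1 = (1 - d)\<^sup>2 - 2 * (1 - d) + 1" by (simp only: mult.assoc xa xx)
      also have "\<dots> = d\<^sup>2" by (simp add: power2_eq_square algebra_simps)
      finally have g: "x\<^sup>2 - 2 * x * a + 1 = d\<^sup>2" .
      have g2: "1 - x\<^sup>2 = d * (2 - d)" unfolding xx by (simp add: power2_eq_square algebra_simps)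
      have bnd: "dval 1 ck (of_real x * u) \<le> 2 * d / rho" if "rho > 0"
        "dval 1 ck (of_real x * u) = arsinh (\<bar>x\<^sup>2 - 2 * x * a + 1\<bar> / ((1 - x\<^sup>2) * rho))" for ck rho
      proof -
        have "\<bar>x\<^sup>2 - 2 * x * a + 1\<bar> / ((1 - x\<^sup>2) * rho) = d / ((2 - d) * rho)"
          unfolding g g2 using d by (simp add: power2_eq_square)
        also have "\<dots> \<le> d / rho" using d that(1) by (simp add: divide_simps)
        finally have le: "\<bar>x\<^sup>2 - 2 * x * a + 1\<bar> / ((1 - x\<^sup>2) * rho) \<le> d / rho" .
        have "dval 1 ck (of_real x * u) \<le> arsinh (d / rho)" unfolding that(2) by (rule arsinh_mono[OF le])
        also have "\<dots> \<le> 2 * (d / rho)" using d that(1) by (intro arsinh_le_2x) simp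
        finally show ?thesis by simp
      qed
      have "hdist_sets (Lg 1 c1) (Lg 1 c2) \<le> 2 * d / rho1 + 2 * d / rho2"
        using up[OF x1] bnd[OF rho1(1) dvx1] bnd[OF rho2(1) dvx2] by linarith
      also have "\<dots> = d * K" unfolding K_def by (simp add: field_simps)
      finally show ?thesis using d by simp
    qed
    hence "hdist_sets (Lg 1 c1) (Lg 1 c2) \<le> 0" by (rule field_le_epsilon)
    thus ?thesis using sDz by simp
  qed
  have hs: "hdist_sets (Lg 1 c1) (Lg 1 c2) = arsinh sD"
    using upper hs_lower[OF ne1 ne2 lower] by simp
  have "rho1 / rho2 = r1 / r2" using k rho1 rho2 r1 r2 by (simp add: field_simps)
  thus ?thesis unfolding ID hs coshD by simp
qed

lemma norm_Lg:
  assumes "A \<noteq> 0" "(cmod c)\<^sup>2 - A\<^sup>2 > 0"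
  shows "(cmod (c / of_real A))\<^sup>2 - 1 > 0"
proof -
  have "(cmod (c / of_real A))\<^sup>2 = (cmod c)\<^sup>2 / A\<^sup>2" by (simp add: norm_divide power_divide)
  moreover have "(cmod c)\<^sup>2 / A\<^sup>2 > 1" using assms by simp
  ultimately show ?thesis by simp
qed

lemma im_line_iff:
  assumes u: "cmod u = 1" and q: "cmod q < 1"
  shows "(\<exists>t. \<bar>t\<bar> < 1 \<and> q = complex_of_real t * u) \<longleftrightarrow> Im (cnj u * q) = 0"
proof
  assume "\<exists>t. \<bar>t\<bar> < 1 \<and> q = complex_of_real t * u"
  then obtain t where t: "q = complex_of_real t * u" by blast
  have "cnj u * q = of_real t * (u * cnj u)" unfolding t by (simp only: mult_ac)
  thus "Im (cnj u * q) = 0" using uu[OF u] by simp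
next
  assume h: "Im (cnj u * q) = 0"
  define t where "t = Re (cnj u * q)"
  have e: "cnj u * q = of_real t" unfolding t_def using h by (simp add: complex_eq_iff)
  have "q = (u * cnj u) * q" using uu[OF u] by simp
  also have "\<dots> = u * (cnj u * q)" by (simp only: mult_ac)
  finally have qt: "q = of_real t * u" unfolding e by (simp only: mult_ac)
  have "\<bar>t\<bar> < 1" using q u unfolding qt by (simp add: norm_mult)
  thus "\<exists>t. \<bar>t\<bar> < 1 \<and> q = complex_of_real t * u" using qt by blast
qed

theorem lemma4p8:
  fixes r1 r2 :: real and \<gamma>1 \<gamma>2 :: "complex set"
  assumes "r1 > 0" and "r2 > 0"
    and "hgeodesic \<gamma>1" and "hgeodesic \<gamma>2" and "\<gamma>1 \<inter> \<gamma>2 = {}"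
    and "diameter_of_disk
           {q \<in> pdisk. r1 * sinh (hdist_set q \<gamma>1) = r2 * sinh (hdist_set q \<gamma>2)}"
  shows "\<exists>c1 c2 :: complex. \<exists>\<rho>1 \<rho>2 :: real. \<rho>1 > 0 \<and> \<rho>2 > 0 \<and>
           \<gamma>1 \<subseteq> sphere c1 \<rho>1 \<and> \<gamma>2 \<subseteq> sphere c2 \<rho>2 \<and>
           \<rho>1 / \<rho>2 = r1 / r2 \<and>
           inversive_distance c1 \<rho>1 c2 \<rho>2 = cosh (hdist_sets \<gamma>1 \<gamma>2)"
proof -
  define Loc where "Loc = {q \<in> pdisk. r1 * sinh (hdist_set q \<gamma>1) = r2 * sinh (hdist_set q \<gamma>2)}"
  obtain u where u: "cmod u = 1" and LocD: "Loc = {complex_of_real t * u | t. \<bar>t\<bar> < 1}"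
    using assms(6) unfolding diameter_of_disk_def Loc_def by blast
  obtain A1 c1' where D1: "(cmod c1')\<^sup>2 - A1\<^sup>2 > 0" and g1: "\<gamma>1 = Lg A1 c1'" using geo_class[OF assms(3)] by blast
  obtain A2 c2' where D2: "(cmod c2')\<^sup>2 - A2\<^sup>2 > 0" and g2: "\<gamma>2 = Lg A2 c2'" using geo_class[OF assms(4)] by blast
  have ne1: "\<gamma>1 \<noteq> {}" and ne2: "\<gamma>2 \<noteq> {}" using hgeo_ne assms(3,4) by auto
  have z0: "(0::complex) \<in> Loc" unfolding LocD by (rule CollectI, rule exI[of _ 0]) simp
  have "r1 * sinh (hdist_set 0 \<gamma>1) = r2 * sinh (hdist_set 0 \<gamma>2)" using z0 unfolding Loc_def by simp
  moreover have "sinh (hdist_set 0 \<gamma>1) = \<bar>A1\<bar> / sqrt ((cmod c1')\<^sup>2 - A1\<^sup>2)"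
    unfolding g1 using sinh_hdist_set[of 0 c1' A1] D1 by (simp add: hH_def)
  moreover have "sinh (hdist_set 0 \<gamma>2) = \<bar>A2\<bar> / sqrt ((cmod c2')\<^sup>2 - A2\<^sup>2)"
    unfolding g2 using sinh_hdist_set[of 0 c2' A2] D2 by (simp add: hH_def)
  ultimately have e0: "r1 * (\<bar>A1\<bar> / sqrt ((cmod c1')\<^sup>2 - A1\<^sup>2)) = r2 * (\<bar>A2\<bar> / sqrt ((cmod c2')\<^sup>2 - A2\<^sup>2))"
    by simp
  have s1: "sqrt ((cmod c1')\<^sup>2 - A1\<^sup>2) > 0" and s2: "sqrt ((cmod c2')\<^sup>2 - A2\<^sup>2) > 0" using D1 D2 by simp_all
  have A12: "A1 = 0 \<longleftrightarrow> A2 = 0" using e0 s1 s2 assms(1,2) by auto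
  have A1nz: "A1 \<noteq> 0"
  proof
    assume "A1 = 0"
    hence "A2 = 0" using A12 by simp
    hence "(0::complex) \<in> \<gamma>1 \<inter> \<gamma>2" using \<open>A1 = 0\<close> unfolding g1 g2 Lg_def hH_def by simp
    thus False using assms(5) by simp
  qed
  have A2nz: "A2 \<noteq> 0" using A1nz A12 by simp
  define c1 where "c1 = c1' / of_real A1"
  define c2 where "c2 = c2' / of_real A2"
  have g1': "\<gamma>1 = Lg 1 c1" unfolding g1 c1_def using Lg_scale(1)[OF A1nz] .
  have g2': "\<gamma>2 = Lg 1 c2" unfolding g2 c2_def using Lg_scale(1)[OF A2nz] .
  have cc1: "(cmod c1)\<^sup>2 - 1 > 0" unfolding c1_def by (rule norm_Lg[OF A1nz D1])
  have cc2: "(cmod c2)\<^sup>2 - 1 > 0" unfolding c2_def by (rule norm_Lg[OF A2nz D2])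
  define rho1 where "rho1 = sqrt ((cmod c1)\<^sup>2 - 1)"
  define rho2 where "rho2 = sqrt ((cmod c2)\<^sup>2 - 1)"
  have rho: "rho1 > 0" "rho2 > 0" using cc1 cc2 unfolding rho1_def rho2_def by simp_all
  have cc1': "(cmod c1)\<^sup>2 - 1\<^sup>2 > 0" and cc2': "(cmod c2)\<^sup>2 - 1\<^sup>2 > 0" using cc1 cc2 by simp_all
  have loc: "r1 * \<bar>hH 1 c1 q\<bar> / rho1 = r2 * \<bar>hH 1 c2 q\<bar> / rho2 \<longleftrightarrow> Im (cnj u * q) = 0" if q: "cmod q < 1" for q
  proof -
    have pq: "1 - (cmod q)\<^sup>2 > 0" using disk_sq[OF q] by simp
    have "q \<in> Loc \<longleftrightarrow> r1 * (\<bar>hH 1 c1 q\<bar> / ((1 - (cmod q)\<^sup>2) * rho1)) = r2 * (\<bar>hH 1 c2 q\<bar> / ((1 - (cmod q)\<^sup>2) * rho2))"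
      unfolding Loc_def g1' g2' using q sinh_hdist_set[OF q cc1'] sinh_hdist_set[OF q cc2']
      by (simp add: pdisk_iff rho1_def rho2_def)
    also have "\<dots> \<longleftrightarrow> (r1 * \<bar>hH 1 c1 q\<bar> / rho1) / (1 - (cmod q)\<^sup>2) = (r2 * \<bar>hH 1 c2 q\<bar> / rho2) / (1 - (cmod q)\<^sup>2)"
      by (simp only: times_divide_eq_right divide_divide_eq_left mult.commute)
    also have "\<dots> \<longleftrightarrow> r1 * \<bar>hH 1 c1 q\<bar> / rho1 = r2 * \<bar>hH 1 c2 q\<bar> / rho2"
      by (subst divide_cancel_right) (use pq in simp)
    finally have "q \<in> Loc \<longleftrightarrow> r1 * \<bar>hH 1 c1 q\<bar> / rho1 = r2 * \<bar>hH 1 c2 q\<bar> / rho2" .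
    moreover have "q \<in> Loc \<longleftrightarrow> Im (cnj u * q) = 0" unfolding LocD using im_line_iff[OF u q] by blast
    ultimately show ?thesis by simp
  qed
  have res: "rho1 / rho2 = r1 / r2 \<and> inversive_distance c1 rho1 c2 rho2 = cosh (hdist_sets (Lg 1 c1) (Lg 1 c2))"
    by (rule core[OF u cc1 cc2 rho1_def rho2_def assms(1,2)])
       (use assms(5) ne1 ne2 loc in \<open>simp_all add: g1' g2'\<close>)
  have sph1: "\<gamma>1 \<subseteq> sphere c1 rho1" unfolding g1' rho1_def using Lg1_sphere cc1 by blast
  have sph2: "\<gamma>2 \<subseteq> sphere c2 rho2" unfolding g2' rho2_def using Lg1_sphere cc2 by blast
  show ?thesis using rho sph1 sph2 res unfolding g1' g2' by blast
qed


end
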